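(* (i) Let $\Phi:X_1\to\mathcal{CP}_{V,W}(Y_1)$ and $\Psi:X_2\to\mathcal{CP}_{W,U}(Y_2)$ be simplicial instruments. Then the levelwise-defined map $\Psi\circ\Phi:X_1\times X_2\to\mathcal{CP}_{V,U}(Y_1\times Y_2)$, given on $n$-simplices by $(\Psi\circ\Phi)_{(x_1,x_2)}^{(y_1,y_2)}=\Psi_{x_2}^{y_2}\circ\Phi_{x_1}^{y_1}$, is a map of simplicial sets. (ii) Let $\Phi:X\to\mathcal{CP}_{V_1,W_1}(Y)$ and $\Psi:Y\to\mathcal{CP}_{V_2,W_2}(Z)$ be simplicial instruments. Then the levelwise-defined map $\Psi\bullet\Phi:X\to\mathcal{CP}_{V_1\otimes V_2,W_1\otimes W_2}(Z)$, given for $x\in X_n$, $z\in Z_n$ by $(\Psi\bullet\Phi)_x^z=\sum_{y\in Y_n}\Phi_x^y\otimes\Psi_y^z$, is a map of simplicial sets.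
   Context: All Hilbert spaces are finite-dimensional; $\operatorname{CP}(V,W)$ is the set of completely positive maps $L(V)\to L(W)$ and $\operatorname{C}(V,W)$ the subset of channels (trace-preserving ones). For Hilbert spaces $V,W$ and a set $S$, $\mathcal{CP}_{V,W}(S)$ is the set of finitely supported functions $\Phi:S\to\operatorname{CP}(V,W)$, $s\mapsto\Phi^s$, with $\sum_{s}\Phi^s\in\operatorname{C}(V,W)$; for a function $f:S\to T$, $f_*:\mathcal{CP}_{V,W}(S)\to\mathcal{CP}_{V,W}(T)$ is $(f_*\Phi)^t=\sum_{s:f(s)=t}\Phi^s$. This functor is applied levelwise to simplicial sets (functors $\Delta^{\mathrm{op}}\to\mathsf{Set}$, with $\Delta$ the category of finite ordinals $[n]=\{0,\dots,n\}$ and order-preserving maps), so for a simplicial set $Y$ and $\theta:[k]\to[n]$, $\theta^*$ acts on $\mathcal{CP}_{V,W}(Y)_n=\mathcal{CP}_{V,W}(Y_n)$ as $(\theta^* )_*$. A simplicial instrument is a map of simplicial sets $\Phi:X\to\mathcal{CP}_{V,W}(Y)$; we write $\Phi_x^y$ for the value at $y\in Y_n$ of the image of $x\in X_n$. Products of simplicial sets are levelwise, and $L(V_1)\otimes L(V_2)\cong L(V_1\otimes V_2)$ via the Kronecker product. *)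

theory Defs
  imports "Jordan_Normal_Form.Matrix" Complex_Main
begin

text \<open>A finite-dimensional Hilbert space is modelled as C^d; L(C^d) is the set of
complex d x d matrices. A linear map L(C^dV) -> L(C^dW) is represented by a function on
matrices which is linear on carrier_mat dV dV, lands in carrier_mat dW dW, and is
(canonically) the zero matrix 0_m dW dW outside carrier_mat dV dV.\<close>

type_synonym superop = "complex mat \<Rightarrow> complex mat"

definition mtrace :: "nat \<Rightarrow> complex mat \<Rightarrow> complex" where
  "mtrace d M = (\<Sum>i<d. M $$ (i, i))"

definition psd :: "nat \<Rightarrow> complex mat \<Rightarrow> bool" where
  "psd d A \<longleftrightarrow> A \<in> carrier_mat d d \<and>
     (\<forall>v :: nat \<Rightarrow> complex.
        let q = (\<Sum>i<d. \<Sum>j<d. cnj (v i) * A $$ (i, j) * v j) in Re q \<ge> 0 \<and> Im q = 0)"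

definition is_superop :: "nat \<Rightarrow> nat \<Rightarrow> superop \<Rightarrow> bool" where
  "is_superop dV dW f \<longleftrightarrow>
     (\<forall>M. M \<notin> carrier_mat dV dV \<longrightarrow> f M = 0\<^sub>m dW dW) \<and>
     (\<forall>M \<in> carrier_mat dV dV. f M \<in> carrier_mat dW dW) \<and>
     (\<forall>M \<in> carrier_mat dV dV. \<forall>N \<in> carrier_mat dV dV. f (M + N) = f M + f N) \<and>
     (\<forall>M \<in> carrier_mat dV dV. \<forall>c. f (c \<cdot>\<^sub>m M) = c \<cdot>\<^sub>m f M)"

text \<open>The (a,b) block of size d of a block matrix (index convention of the Kronecker
product: row a*d + r).\<close>
definition block :: "nat \<Rightarrow> complex mat \<Rightarrow> nat \<Rightarrow> nat \<Rightarrow> complex mat" where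
  "block d M a b = mat d d (\<lambda>(r, c). M $$ (a * d + r, b * d + c))"

text \<open>id_{L(C^k)} tensor f, acting blockwise on (k*dV) x (k*dV) matrices.\<close>
definition ampl :: "nat \<Rightarrow> nat \<Rightarrow> nat \<Rightarrow> superop \<Rightarrow> superop" where
  "ampl k dV dW f M = mat (k * dW) (k * dW)
     (\<lambda>(i, j). f (block dV M (i div dW) (j div dW)) $$ (i mod dW, j mod dW))"

definition is_CP :: "nat \<Rightarrow> nat \<Rightarrow> superop \<Rightarrow> bool" where
  "is_CP dV dW f \<longleftrightarrow> is_superop dV dW f \<and>
     (\<forall>k. \<forall>M. psd (k * dV) M \<longrightarrow> psd (k * dW) (ampl k dV dW f M))"

definition is_channel :: "nat \<Rightarrow> nat \<Rightarrow> superop \<Rightarrow> bool" where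
  "is_channel dV dW f \<longleftrightarrow> is_CP dV dW f \<and>
     (\<forall>M \<in> carrier_mat dV dV. mtrace dW (f M) = mtrace dV M)"

definition zero_superop :: "nat \<Rightarrow> superop" where
  "zero_superop dW = (\<lambda>M. 0\<^sub>m dW dW)"

definition superop_sum :: "nat \<Rightarrow> ('s \<Rightarrow> superop) \<Rightarrow> 's set \<Rightarrow> superop" where
  "superop_sum dW F A = (\<lambda>M. mat dW dW (\<lambda>(i, j). \<Sum>a\<in>A. F a M $$ (i, j)))"

definition supp :: "nat \<Rightarrow> ('s \<Rightarrow> superop) \<Rightarrow> 's set" where
  "supp dW \<Phi> = {s. \<Phi> s \<noteq> zero_superop dW}"

text \<open>CP_{V,W}(S): finitely supported functions S -> CP(V,W) whose sum is a channel.
Outside its support (and in particular outside S) a function takes the value zero.\<close>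
definition CPfam :: "nat \<Rightarrow> nat \<Rightarrow> 's set \<Rightarrow> ('s \<Rightarrow> superop) set" where
  "CPfam dV dW S = {\<Phi>. finite (supp dW \<Phi>) \<and> supp dW \<Phi> \<subseteq> S \<and>
      (\<forall>s. is_CP dV dW (\<Phi> s)) \<and> is_channel dV dW (superop_sum dW \<Phi> (supp dW \<Phi>))}"

definition push :: "nat \<Rightarrow> ('s \<Rightarrow> 't) \<Rightarrow> ('s \<Rightarrow> superop) \<Rightarrow> ('t \<Rightarrow> superop)" where
  "push dW f \<Phi> = (\<lambda>t. superop_sum dW \<Phi> {s \<in> supp dW \<Phi>. f s = t})"

text \<open>Morphisms [k] -> [n] of the simplex category, as functions nat => nat
(only their values on {0..k} matter).\<close>
definition delta_mor :: "nat \<Rightarrow> nat \<Rightarrow> (nat \<Rightarrow> nat) \<Rightarrow> bool" where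
  "delta_mor k n \<theta> \<longleftrightarrow> (\<forall>i \<le> k. \<theta> i \<le> n) \<and> (\<forall>i j. i \<le> j \<longrightarrow> j \<le> k \<longrightarrow> \<theta> i \<le> \<theta> j)"

text \<open>A simplicial set is given by the sets of n-simplices Xs n and the actions
Xa \<theta> k n : X_n -> X_k of \<theta> : [k] -> [n] (i.e. \<theta>^* ), satisfying functoriality.\<close>
definition sset :: "(nat \<Rightarrow> 'a set) \<Rightarrow> ((nat \<Rightarrow> nat) \<Rightarrow> nat \<Rightarrow> nat \<Rightarrow> 'a \<Rightarrow> 'a) \<Rightarrow> bool" where
  "sset Xs Xa \<longleftrightarrow>
     (\<forall>k n \<theta> x. delta_mor k n \<theta> \<longrightarrow> x \<in> Xs n \<longrightarrow> Xa \<theta> k n x \<in> Xs k) \<and>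
     (\<forall>k n \<theta> \<theta>' x. delta_mor k n \<theta> \<longrightarrow> (\<forall>i \<le> k. \<theta> i = \<theta>' i) \<longrightarrow> x \<in> Xs n \<longrightarrow>
        Xa \<theta>' k n x = Xa \<theta> k n x) \<and>
     (\<forall>n x. x \<in> Xs n \<longrightarrow> Xa id n n x = x) \<and>
     (\<forall>j k n \<phi> \<theta> x. delta_mor j k \<phi> \<longrightarrow> delta_mor k n \<theta> \<longrightarrow> x \<in> Xs n \<longrightarrow>
        Xa (\<theta> \<circ> \<phi>) j n x = Xa \<phi> j k (Xa \<theta> k n x))"

definition sset_map ::
  "(nat \<Rightarrow> 'a set) \<Rightarrow> ((nat \<Rightarrow> nat) \<Rightarrow> nat \<Rightarrow> nat \<Rightarrow> 'a \<Rightarrow> 'a) \<Rightarrow>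
   (nat \<Rightarrow> 'b set) \<Rightarrow> ((nat \<Rightarrow> nat) \<Rightarrow> nat \<Rightarrow> nat \<Rightarrow> 'b \<Rightarrow> 'b) \<Rightarrow>
   (nat \<Rightarrow> 'a \<Rightarrow> 'b) \<Rightarrow> bool" where
  "sset_map Xs Xa Ys Ya F \<longleftrightarrow>
     (\<forall>n x. x \<in> Xs n \<longrightarrow> F n x \<in> Ys n) \<and>
     (\<forall>k n \<theta> x. delta_mor k n \<theta> \<longrightarrow> x \<in> Xs n \<longrightarrow> F k (Xa \<theta> k n x) = Ya \<theta> k n (F n x))"

definition prod_s :: "(nat \<Rightarrow> 'a set) \<Rightarrow> (nat \<Rightarrow> 'b set) \<Rightarrow> nat \<Rightarrow> ('a \<times> 'b) set" where
  "prod_s Xs1 Xs2 n = Xs1 n \<times> Xs2 n"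

definition prod_a ::
  "((nat \<Rightarrow> nat) \<Rightarrow> nat \<Rightarrow> nat \<Rightarrow> 'a \<Rightarrow> 'a) \<Rightarrow> ((nat \<Rightarrow> nat) \<Rightarrow> nat \<Rightarrow> nat \<Rightarrow> 'b \<Rightarrow> 'b) \<Rightarrow>
   (nat \<Rightarrow> nat) \<Rightarrow> nat \<Rightarrow> nat \<Rightarrow> 'a \<times> 'b \<Rightarrow> 'a \<times> 'b" where
  "prod_a Xa1 Xa2 \<theta> k n p = (Xa1 \<theta> k n (fst p), Xa2 \<theta> k n (snd p))"

definition CP_s :: "nat \<Rightarrow> nat \<Rightarrow> (nat \<Rightarrow> 'y set) \<Rightarrow> nat \<Rightarrow> ('y \<Rightarrow> superop) set" where
  "CP_s dV dW Ys n = CPfam dV dW (Ys n)"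

definition CP_a :: "nat \<Rightarrow> ((nat \<Rightarrow> nat) \<Rightarrow> nat \<Rightarrow> nat \<Rightarrow> 'y \<Rightarrow> 'y) \<Rightarrow>
   (nat \<Rightarrow> nat) \<Rightarrow> nat \<Rightarrow> nat \<Rightarrow> ('y \<Rightarrow> superop) \<Rightarrow> ('y \<Rightarrow> superop)" where
  "CP_a dW Ya \<theta> k n \<Phi> = push dW (Ya \<theta> k n) \<Phi>"

definition sinstr ::
  "nat \<Rightarrow> nat \<Rightarrow> (nat \<Rightarrow> 'x set) \<Rightarrow> ((nat \<Rightarrow> nat) \<Rightarrow> nat \<Rightarrow> nat \<Rightarrow> 'x \<Rightarrow> 'x) \<Rightarrow>
   (nat \<Rightarrow> 'y set) \<Rightarrow> ((nat \<Rightarrow> nat) \<Rightarrow> nat \<Rightarrow> nat \<Rightarrow> 'y \<Rightarrow> 'y) \<Rightarrow>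
   (nat \<Rightarrow> 'x \<Rightarrow> 'y \<Rightarrow> superop) \<Rightarrow> bool" where
  "sinstr dV dW Xs Xa Ys Ya \<Phi> \<longleftrightarrow> sset_map Xs Xa (CP_s dV dW Ys) (CP_a dW Ya) \<Phi>"

definition kron :: "nat \<Rightarrow> nat \<Rightarrow> complex mat \<Rightarrow> complex mat \<Rightarrow> complex mat" where
  "kron d1 d2 A B = mat (d1 * d2) (d1 * d2)
     (\<lambda>(i, j). A $$ (i div d2, j div d2) * B $$ (i mod d2, j mod d2))"

definition unit_mat :: "nat \<Rightarrow> nat \<Rightarrow> nat \<Rightarrow> complex mat" where
  "unit_mat d a b = mat d d (\<lambda>(r, c). if r = a \<and> c = b then 1 else 0)"

text \<open>f tensor g : L(V1 (x) V2) -> L(W1 (x) W2), the linear extension of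
A (x) B |-> f A (x) g B (under L(V1)(x)L(V2) = L(V1(x)V2) via Kronecker product).\<close>
definition tensor_superop :: "nat \<Rightarrow> nat \<Rightarrow> nat \<Rightarrow> nat \<Rightarrow> superop \<Rightarrow> superop \<Rightarrow> superop" where
  "tensor_superop dV1 dV2 dW1 dW2 f g = (\<lambda>M.
     if M \<in> carrier_mat (dV1 * dV2) (dV1 * dV2) then
       mat (dW1 * dW2) (dW1 * dW2) (\<lambda>(i, j).
         \<Sum>a<dV1. \<Sum>b<dV1. \<Sum>c<dV2. \<Sum>d<dV2.
           M $$ (a * dV2 + c, b * dV2 + d) *
           kron dW1 dW2 (f (unit_mat dV1 a b)) (g (unit_mat dV2 c d)) $$ (i, j))
     else 0\<^sub>m (dW1 * dW2) (dW1 * dW2))"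

definition seq_comp :: "(nat \<Rightarrow> 'x1 \<Rightarrow> 'y1 \<Rightarrow> superop) \<Rightarrow> (nat \<Rightarrow> 'x2 \<Rightarrow> 'y2 \<Rightarrow> superop) \<Rightarrow>
   nat \<Rightarrow> 'x1 \<times> 'x2 \<Rightarrow> 'y1 \<times> 'y2 \<Rightarrow> superop" where
  "seq_comp \<Phi> \<Psi> n x y = \<Psi> n (snd x) (snd y) \<circ> \<Phi> n (fst x) (fst y)"

definition bullet_comp :: "nat \<Rightarrow> nat \<Rightarrow> nat \<Rightarrow> nat \<Rightarrow> (nat \<Rightarrow> 'y set) \<Rightarrow>
   (nat \<Rightarrow> 'x \<Rightarrow> 'y \<Rightarrow> superop) \<Rightarrow> (nat \<Rightarrow> 'y \<Rightarrow> 'z \<Rightarrow> superop) \<Rightarrow>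
   nat \<Rightarrow> 'x \<Rightarrow> 'z \<Rightarrow> superop" where
  "bullet_comp dV1 dV2 dW1 dW2 Ys \<Phi> \<Psi> n x z =
     superop_sum (dW1 * dW2)
       (\<lambda>y. tensor_superop dV1 dV2 dW1 dW2 (\<Phi> n x y) (\<Psi> n y z))
       (Ys n \<inter> supp dW1 (\<Phi> n x))"

end

theory Submission
  imports Defs
begin

lemma lt_mult_add: "a < m \<Longrightarrow> c < n \<Longrightarrow> a*n + c < m*(n::nat)"
proof -
  assume "a<m" "c<n"
  have "a*n + c < a*n + n" using \<open>c<n\<close> by simp
  also have "\<dots> = (a+1)*n" by simp
  also have "\<dots> \<le> m*n" using \<open>a<m\<close> by (intro mult_right_mono) auto
  finally show ?thesis .
qed

lemma divmod_idx[simp]: "b < (n::nat) \<Longrightarrow> (a*n+b) div n = a" "b < (n::nat) \<Longrightarrow> (a*n+b) mod n = b"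
  by auto

lemma sum_div_mod: "(\<Sum>i<m*n. h (i div n) (i mod n)) = (\<Sum>a<m. \<Sum>b<(n::nat). h a b)"
proof -
  have "(\<Sum>i<m*n. h (i div n) (i mod n)) = (\<Sum>a<m. \<Sum>i\<in>{a*n..<a*n+n}. h (i div n) (i mod n))"
    by (rule sum.nat_group[symmetric])
  also have "\<dots> = (\<Sum>a<m. \<Sum>b<n. h a b)"
  proof (rule sum.cong[OF refl])
    fix a
    have "(\<Sum>i\<in>{a*n..<a*n+n}. h (i div n) (i mod n)) = (\<Sum>b\<in>{0..<n}. h ((b + a*n) div n) ((b+a*n) mod n))"
      using sum.shift_bounds_nat_ivl[of "\<lambda>i. h (i div n) (i mod n)" 0 "a*n" n] by (simp add: add.commute)
    also have "\<dots> = (\<Sum>b<n. h a b)"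
      by (rule sum.cong) (auto simp: add.commute)
    finally show "(\<Sum>i\<in>{a*n..<a*n+n}. h (i div n) (i mod n)) = (\<Sum>b<n. h a b)" .
  qed
  finally show ?thesis .
qed

lemma superop_carrier: "is_superop d e f \<Longrightarrow> f M \<in> carrier_mat e e"
  unfolding is_superop_def by (cases "M \<in> carrier_mat d d") auto
lemma superop_out: "is_superop d e f \<Longrightarrow> M \<notin> carrier_mat d d \<Longrightarrow> f M = 0\<^sub>m e e"
  unfolding is_superop_def by auto
lemma superop_add: "is_superop d e f \<Longrightarrow> M \<in> carrier_mat d d \<Longrightarrow> N \<in> carrier_mat d d \<Longrightarrow> f (M + N) = f M + f N"
  unfolding is_superop_def by auto
lemma superop_smult: "is_superop d e f \<Longrightarrow> M \<in> carrier_mat d d \<Longrightarrow> f (c \<cdot>\<^sub>m M) = c \<cdot>\<^sub>m f M"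
  unfolding is_superop_def by auto

lemma superop_zero: assumes f: "is_superop d e f" shows "f (0\<^sub>m d d) = 0\<^sub>m e e"
proof -
  have "0\<^sub>m d d = (0::complex) \<cdot>\<^sub>m 0\<^sub>m d d" by (rule eq_matI) auto
  hence "f (0\<^sub>m d d) = 0 \<cdot>\<^sub>m f (0\<^sub>m d d)" using superop_smult[OF f, of "0\<^sub>m d d" 0] by simp
  also have "\<dots> = 0\<^sub>m e e" using superop_carrier[OF f, of "0\<^sub>m d d"] by (intro eq_matI) auto
  finally show ?thesis .
qed

lemma superop_sum_lin:
  assumes f: "is_superop d e f" and fin: "finite A" and N: "\<And>a. a \<in> A \<Longrightarrow> N a \<in> carrier_mat d d"
  shows "f (mat d d (\<lambda>(i,j). \<Sum>a\<in>A. N a $$ (i,j))) = mat e e (\<lambda>(i,j). \<Sum>a\<in>A. f (N a) $$ (i,j))"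
using fin N proof (induction A rule: finite_induct)
  case empty
  have "mat d d (\<lambda>(i,j). \<Sum>a\<in>{}. N a $$ (i,j)) = 0\<^sub>m d d" by (rule eq_matI) auto
  moreover have "mat e e (\<lambda>(i,j). \<Sum>a\<in>{}. f (N a) $$ (i,j)) = 0\<^sub>m e e" by (rule eq_matI) auto
  ultimately show ?case using superop_zero[OF f] by (simp add: zero_mat_def)
next
  case (insert x F)
  let ?R = "mat d d (\<lambda>(i,j). \<Sum>a\<in>F. N a $$ (i,j))"
  have Nx: "N x \<in> carrier_mat d d" using insert by auto
  have R: "?R \<in> carrier_mat d d" by auto
  have "mat d d (\<lambda>(i,j). \<Sum>a\<in>insert x F. N a $$ (i,j)) = N x + ?R"
    using insert Nx by (intro eq_matI) auto
  hence "f (mat d d (\<lambda>(i,j). \<Sum>a\<in>insert x F. N a $$ (i,j))) = f (N x) + f ?R"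
    using superop_add[OF f Nx R] by simp
  also have "f ?R = mat e e (\<lambda>(i,j). \<Sum>a\<in>F. f (N a) $$ (i,j))" by (rule insert.IH) (use insert.prems in auto)
  also have "f (N x) + mat e e (\<lambda>(i,j). \<Sum>a\<in>F. f (N a) $$ (i,j)) = mat e e (\<lambda>(i,j). \<Sum>a\<in>insert x F. f (N a) $$ (i,j))"
    using insert superop_carrier[OF f, of "N x"] by (intro eq_matI) auto
  finally show ?case .
qed

lemma superop_expand:
  assumes f: "is_superop d e f" and N: "N \<in> carrier_mat d d" and ij: "i < e" "j < e"
  shows "f N $$ (i,j) = (\<Sum>a<d. \<Sum>b<d. N $$ (a,b) * f (unit_mat d a b) $$ (i,j))"
proof -
  let ?A = "{..<d} \<times> {..<d}"
  let ?M = "\<lambda>p. N $$ p \<cdot>\<^sub>m unit_mat d (fst p) (snd p)"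
  have Mc: "\<And>p. ?M p \<in> carrier_mat d d" by (auto simp: unit_mat_def)
  have "N = mat d d (\<lambda>(i,j). \<Sum>p\<in>?A. ?M p $$ (i,j))"
  proof (rule eq_matI)
    fix i j assume "i < dim_row (mat d d (\<lambda>(i,j). \<Sum>p\<in>?A. ?M p $$ (i,j)))" "j < dim_col (mat d d (\<lambda>(i,j). \<Sum>p\<in>?A. ?M p $$ (i,j)))"
    then have ij: "i<d" "j<d" by auto
    have "(\<Sum>p\<in>?A. ?M p $$ (i,j)) = (\<Sum>p\<in>?A. if p = (i,j) then N $$ (i,j) else 0)"
      using ij by (intro sum.cong) (auto simp: unit_mat_def)
    also have "\<dots> = N $$ (i,j)" using ij by simp
    finally show "N $$ (i,j) = mat d d (\<lambda>(i,j). \<Sum>p\<in>?A. ?M p $$ (i,j)) $$ (i,j)" using ij by simp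
  qed (use N in auto)
  hence "f N = mat e e (\<lambda>(i,j). \<Sum>p\<in>?A. f (?M p) $$ (i,j))"
    using superop_sum_lin[OF f, of ?A ?M] Mc by simp
  hence "f N $$ (i,j) = (\<Sum>p\<in>?A. f (?M p) $$ (i,j))" using ij by simp
  also have "\<dots> = (\<Sum>p\<in>?A. N $$ p * f (unit_mat d (fst p) (snd p)) $$ (i,j))"
  proof (rule sum.cong[OF refl])
    fix p
    have c: "unit_mat d (fst p) (snd p) \<in> carrier_mat d d" by (auto simp: unit_mat_def)
    show "f (?M p) $$ (i,j) = N $$ p * f (unit_mat d (fst p) (snd p)) $$ (i,j)"
      using superop_smult[OF f c] superop_carrier[OF f, of "unit_mat d (fst p) (snd p)"] ij by simp
  qed
  also have "\<dots> = (\<Sum>a<d. \<Sum>b<d. N $$ (a,b) * f (unit_mat d a b) $$ (i,j))"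
    by (simp add: sum.cartesian_product split_def)
  finally show ?thesis .
qed


definition qf :: "nat \<Rightarrow> complex mat \<Rightarrow> (nat \<Rightarrow> complex) \<Rightarrow> complex" where
  "qf n A v = (\<Sum>i<n. \<Sum>j<n. cnj (v i) * A $$ (i, j) * v j)"

lemma psd_iff: "psd n A \<longleftrightarrow> A \<in> carrier_mat n n \<and> (\<forall>v. Re (qf n A v) \<ge> 0 \<and> Im (qf n A v) = 0)"
  unfolding psd_def qf_def Let_def by simp

lemma qf_sum: "qf n (mat n n (\<lambda>(i,j). \<Sum>a\<in>A. P a $$ (i,j))) v = (\<Sum>a\<in>A. qf n (P a) v)"
proof -
  have "qf n (mat n n (\<lambda>(i,j). \<Sum>a\<in>A. P a $$ (i,j))) v = (\<Sum>i<n. \<Sum>j<n. \<Sum>a\<in>A. cnj (v i) * P a $$ (i, j) * v j)"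
    unfolding qf_def by (intro sum.cong refl) (simp add: sum_distrib_left sum_distrib_right)
  also have "\<dots> = (\<Sum>a\<in>A. qf n (P a) v)"
    unfolding qf_def by (simp add: sum.swap[of _ A])
  finally show ?thesis .
qed

lemma psd_sum:
  assumes "\<And>a. a \<in> A \<Longrightarrow> psd n (P a)"
  shows "psd n (mat n n (\<lambda>(i,j). \<Sum>a\<in>A. P a $$ (i,j)))"
  unfolding psd_iff qf_sum using assms by (auto simp: psd_iff Re_sum Im_sum intro: sum_nonneg)

lemma psd_perm:
  assumes P: "psd n A" and b: "bij_betw \<rho> {..<n} {..<n}"
  shows "psd n (mat n n (\<lambda>(i,j). A $$ (\<rho> i, \<rho> j)))"
proof -
  have "Re (qf n (mat n n (\<lambda>(i,j). A $$ (\<rho> i, \<rho> j))) v) \<ge> 0 \<and> Im (qf n (mat n n (\<lambda>(i,j). A $$ (\<rho> i, \<rho> j))) v) = 0" for v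
  proof -
    define u where "u = v \<circ> inv_into {..<n} \<rho>"
    have uv: "u (\<rho> i) = v i" if "i < n" for i
      using that b unfolding u_def by (simp add: bij_betw_def inv_into_f_f)
    have "qf n (mat n n (\<lambda>(i,j). A $$ (\<rho> i, \<rho> j))) v = (\<Sum>i<n. \<Sum>j<n. cnj (u (\<rho> i)) * A $$ (\<rho> i, \<rho> j) * u (\<rho> j))"
      unfolding qf_def by (intro sum.cong refl) (simp add: uv)
    also have "\<dots> = (\<Sum>i<n. \<Sum>j<n. cnj (u (\<rho> i)) * A $$ (\<rho> i, j) * u j)"
      by (intro sum.cong refl sum.reindex_bij_betw[OF b, where g = "\<lambda>j. cnj (u (\<rho> _)) * A $$ (\<rho> _, j) * u j"])
    also have "\<dots> = (\<Sum>i<n. \<Sum>j<n. cnj (u i) * A $$ (i, j) * u j)"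
      by (rule sum.reindex_bij_betw[OF b, where g = "\<lambda>i. \<Sum>j<n. cnj (u i) * A $$ (i, j) * u j"])
    also have "\<dots> = qf n A u" unfolding qf_def ..
    finally show ?thesis using P by (simp add: psd_iff)
  qed
  then show ?thesis by (simp add: psd_iff)
qed

lemma ss_index[simp]: "i < e \<Longrightarrow> j < e \<Longrightarrow> superop_sum e F A (M::complex mat) $$ (i,j) = (\<Sum>a\<in>A. F a M $$ (i,j))"
  unfolding superop_sum_def by simp
lemma ss_carrier[simp]: "superop_sum e F A (M::complex mat) \<in> carrier_mat e e"
  unfolding superop_sum_def by simp

lemma ss_dim[simp]: "dim_row (superop_sum e F A (M::complex mat)) = e" "dim_col (superop_sum e F A M) = e"
  unfolding superop_sum_def by simp_all

lemma ss_superop: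
  assumes "\<And>a. a \<in> A \<Longrightarrow> is_superop d e (F a)"
  shows "is_superop d e (superop_sum e F A)"
  unfolding is_superop_def
proof (intro conjI ballI allI impI)
  fix M :: "complex mat" assume "M \<notin> carrier_mat d d"
  then have "\<forall>a\<in>A. F a M = 0\<^sub>m e e" using assms superop_out by blast
  then show "superop_sum e F A M = 0\<^sub>m e e"
    by (intro eq_matI) (auto intro!: sum.neutral simp: superop_sum_def)
next
  fix M N :: "complex mat" assume M: "M \<in> carrier_mat d d" and N: "N \<in> carrier_mat d d"
  show "superop_sum e F A (M + N) = superop_sum e F A M + superop_sum e F A N"
  proof (rule eq_matI)
    fix i j assume "i < dim_row (superop_sum e F A M + superop_sum e F A N)" "j < dim_col (superop_sum e F A M + superop_sum e F A N)"
    then have ij: "i < e" "j < e" by (auto simp: superop_sum_def)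
    have "(\<Sum>a\<in>A. F a (M + N) $$ (i,j)) = (\<Sum>a\<in>A. F a M $$ (i,j) + F a N $$ (i,j))"
    proof (rule sum.cong[OF refl])
      fix a assume a: "a \<in> A"
      have "F a (M + N) = F a M + F a N" using superop_add[OF assms[OF a] M N] .
      then show "F a (M + N) $$ (i,j) = F a M $$ (i,j) + F a N $$ (i,j)"
        using superop_carrier[OF assms[OF a], of M] superop_carrier[OF assms[OF a], of N] ij by simp
    qed
    then show "superop_sum e F A (M + N) $$ (i,j) = (superop_sum e F A M + superop_sum e F A N) $$ (i,j)"
      using ij by (simp add: sum.distrib)
  qed (auto simp: superop_sum_def)
next
  fix M :: "complex mat" and c assume M: "M \<in> carrier_mat d d"
  show "superop_sum e F A (c \<cdot>\<^sub>m M) = c \<cdot>\<^sub>m superop_sum e F A M"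
  proof (rule eq_matI)
    fix i j assume "i < dim_row (c \<cdot>\<^sub>m superop_sum e F A M)" "j < dim_col (c \<cdot>\<^sub>m superop_sum e F A M)"
    then have ij: "i < e" "j < e" by (auto simp: superop_sum_def)
    have "(\<Sum>a\<in>A. F a (c \<cdot>\<^sub>m M) $$ (i,j)) = (\<Sum>a\<in>A. c * F a M $$ (i,j))"
    proof (rule sum.cong[OF refl])
      fix a assume a: "a \<in> A"
      show "F a (c \<cdot>\<^sub>m M) $$ (i,j) = c * F a M $$ (i,j)"
        using superop_smult[OF assms[OF a] M] superop_carrier[OF assms[OF a], of M] ij by simp
    qed
    then show "superop_sum e F A (c \<cdot>\<^sub>m M) $$ (i,j) = (c \<cdot>\<^sub>m superop_sum e F A M) $$ (i,j)"
      using ij by (simp add: sum_distrib_left)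
  qed (auto simp: superop_sum_def)
qed (auto simp: superop_sum_def)

lemma ampl_index[simp]: "i < k*e \<Longrightarrow> j < k*e \<Longrightarrow> ampl k d e f M $$ (i,j) = f (block d M (i div e) (j div e)) $$ (i mod e, j mod e)"
  unfolding ampl_def by simp
lemma ampl_dim[simp]: "dim_row (ampl k d e f M) = k*e" "dim_col (ampl k d e f M) = k*e"
  unfolding ampl_def by simp_all
lemma ampl_carrier[simp]: "ampl k d e f M \<in> carrier_mat (k*e) (k*e)"
  unfolding ampl_def by simp
lemma block_carrier[simp]: "block d M a b \<in> carrier_mat d d"
  unfolding block_def by simp

lemma mod_lt_of_lt_mult: "i < k*(e::nat) \<Longrightarrow> i mod e < e"
  by (cases "e = 0") auto
lemma div_lt_of_lt_mult: "i < k*(e::nat) \<Longrightarrow> i div e < k"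
  by (simp add: less_mult_imp_div_less)

lemma ampl_ss: "ampl k d e (superop_sum e F A) M = mat (k*e) (k*e) (\<lambda>(i,j). \<Sum>a\<in>A. ampl k d e (F a) M $$ (i,j))"
  by (rule eq_matI) (auto simp: mod_lt_of_lt_mult)

lemma ss_CP:
  assumes "\<And>a. a \<in> A \<Longrightarrow> is_CP d e (F a)"
  shows "is_CP d e (superop_sum e F A)"
  unfolding is_CP_def
proof (intro conjI allI impI)
  show "is_superop d e (superop_sum e F A)" using assms by (intro ss_superop) (auto simp: is_CP_def)
  fix k M assume "psd (k*d) M"
  then show "psd (k*e) (ampl k d e (superop_sum e F A) M)"
    unfolding ampl_ss using assms by (intro psd_sum) (auto simp: is_CP_def)
qed

lemma ss_mono:
  assumes "finite B" "A \<subseteq> B" "\<And>b. b \<in> B - A \<Longrightarrow> F b M = 0\<^sub>m e e"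
  shows "superop_sum e F A M = superop_sum e F B M"
  using assms by (intro eq_matI) (auto intro!: sum.mono_neutral_left simp: superop_sum_def)

lemma mtrace_ss: "mtrace e (superop_sum e F A M) = (\<Sum>a\<in>A. mtrace e (F a M))"
  unfolding mtrace_def by (simp add: sum.swap[of _ A])

lemma not_supp: "s \<notin> supp d \<Phi> \<Longrightarrow> \<Phi> s M = 0\<^sub>m d d"
  unfolding supp_def zero_superop_def by auto

lemma block_ampl:
  assumes f: "is_superop d e f" and ab: "a < k" "b < k"
  shows "block e (ampl k d e f M) a b = f (block d M a b)"
proof (rule eq_matI)
  fix r s assume "r < dim_row (f (block d M a b))" "s < dim_col (f (block d M a b))"
  then have rs: "r < e" "s < e" using superop_carrier[OF f, of "block d M a b"] by auto
  have "a*e + r < k*e" "b*e+s < k*e" using lt_mult_add ab rs by auto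
  then show "block e (ampl k d e f M) a b $$ (r,s) = f (block d M a b) $$ (r,s)"
    using rs by (simp add: block_def)
qed (use superop_carrier[OF f, of "block d M a b"] in \<open>auto simp: block_def\<close>)

lemma ampl_comp:
  assumes f: "is_superop d e f"
  shows "ampl k d g (h \<circ> f) M = ampl k e g h (ampl k d e f M)"
  by (rule eq_matI) (auto simp: block_ampl[OF f] div_lt_of_lt_mult)

lemma superop_comp:
  assumes f: "is_superop d e f" and h: "is_superop e g h"
  shows "is_superop d g (h \<circ> f)"
  unfolding is_superop_def
  using superop_out[OF f] superop_zero[OF h] superop_carrier[OF f] superop_carrier[OF h]
    superop_add[OF f] superop_add[OF h] superop_smult[OF f] superop_smult[OF h]
  by auto

lemma CP_comp:
  assumes f: "is_CP d e f" and h: "is_CP e g h"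
  shows "is_CP d g (h \<circ> f)"
  using assms superop_comp ampl_comp unfolding is_CP_def by metis


lemma CPfam_D:
  assumes "P \<in> CPfam dV dW S"
  shows "finite (supp dW P)" "supp dW P \<subseteq> S" "\<And>s. is_CP dV dW (P s)"
    "is_channel dV dW (superop_sum dW P (supp dW P))"
  using assms unfolding CPfam_def by auto

lemma CP_superop: "is_CP d e f \<Longrightarrow> is_superop d e f" unfolding is_CP_def by simp

lemma comp_supp:
  assumes P: "P \<in> CPfam dV dW S1" and Q: "Q \<in> CPfam dW dU S2"
  shows "supp dU (\<lambda>y. Q (snd y) \<circ> P (fst y)) \<subseteq> supp dW P \<times> supp dU Q"
proof
  fix y assume y: "y \<in> supp dU (\<lambda>y. Q (snd y) \<circ> P (fst y))"
  show "y \<in> supp dW P \<times> supp dU Q"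
  proof (rule ccontr)
    assume "y \<notin> supp dW P \<times> supp dU Q"
    then have "fst y \<notin> supp dW P \<or> snd y \<notin> supp dU Q" by (cases y) auto
    then have "Q (snd y) \<circ> P (fst y) = zero_superop dU"
    proof
      assume "fst y \<notin> supp dW P"
      then show ?thesis using superop_zero[OF CP_superop[OF CPfam_D(3)[OF Q]]] not_supp[of "fst y" dW P]
        by (auto simp: zero_superop_def)
    next
      assume "snd y \<notin> supp dU Q"
      then show ?thesis using not_supp[of "snd y" dU Q] by (auto simp: zero_superop_def)
    qed
    then show False using y unfolding supp_def by simp
  qed
qed

lemma comp_member:
  assumes P: "P \<in> CPfam dV dW S1" and Q: "Q \<in> CPfam dW dU S2"
  shows "(\<lambda>y. Q (snd y) \<circ> P (fst y)) \<in> CPfam dV dU (S1 \<times> S2)"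
proof -
  let ?C = "\<lambda>y. Q (snd y) \<circ> P (fst y)"
  note sub = comp_supp[OF P Q]
  have finPQ: "finite (supp dW P \<times> supp dU Q)" using CPfam_D(1)[OF P] CPfam_D(1)[OF Q] by simp
  have fin: "finite (supp dU ?C)" using finite_subset[OF sub finPQ] .
  have sub2: "supp dU ?C \<subseteq> S1 \<times> S2" using sub CPfam_D(2)[OF P] CPfam_D(2)[OF Q] by auto
  have CP: "is_CP dV dU (?C y)" for y using CP_comp CPfam_D(3)[OF P] CPfam_D(3)[OF Q] by blast
  have ch: "is_channel dV dU (superop_sum dU ?C (supp dU ?C))"
    unfolding is_channel_def
  proof (intro conjI ballI)
    show "is_CP dV dU (superop_sum dU ?C (supp dU ?C))" using CP by (intro ss_CP)
    fix M :: "complex mat" assume M: "M \<in> carrier_mat dV dV"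
    have "mtrace dU (superop_sum dU ?C (supp dU ?C) M) = mtrace dU (superop_sum dU ?C (supp dW P \<times> supp dU Q) M)"
      using ss_mono[OF finPQ sub, of ?C M] not_supp[of _ dU ?C] by auto
    also have "\<dots> = (\<Sum>y\<in>supp dW P \<times> supp dU Q. mtrace dU (Q (snd y) (P (fst y) M)))"
      by (simp add: mtrace_ss)
    also have "\<dots> = (\<Sum>y1\<in>supp dW P. \<Sum>y2\<in>supp dU Q. mtrace dU (Q y2 (P y1 M)))"
      by (simp add: sum.cartesian_product split_def)
    also have "\<dots> = (\<Sum>y1\<in>supp dW P. mtrace dU (superop_sum dU Q (supp dU Q) (P y1 M)))"
      by (simp add: mtrace_ss)
    also have "\<dots> = (\<Sum>y1\<in>supp dW P. mtrace dW (P y1 M))"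
      using CPfam_D(4)[OF Q] superop_carrier[OF CP_superop[OF CPfam_D(3)[OF P]]]
      unfolding is_channel_def by auto
    also have "\<dots> = mtrace dW (superop_sum dW P (supp dW P) M)"
      by (simp add: mtrace_ss)
    also have "\<dots> = mtrace dV M" using CPfam_D(4)[OF P] M unfolding is_channel_def by auto
    finally show "mtrace dU (superop_sum dU ?C (supp dU ?C) M) = mtrace dV M" .
  qed
  show ?thesis unfolding CPfam_def using fin sub2 CP ch by auto
qed

lemma comp_push:
  fixes P :: "'s1 \<Rightarrow> superop" and Q :: "'s2 \<Rightarrow> superop" and f1 :: "'s1 \<Rightarrow> 't1" and f2 :: "'s2 \<Rightarrow> 't2"
  assumes P: "P \<in> CPfam dV dW S1" and Q: "Q \<in> CPfam dW dU S2"
  shows "(\<lambda>y. push dU f2 Q (snd y) \<circ> push dW f1 P (fst y)) =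
         push dU (\<lambda>y. (f1 (fst y), f2 (snd y))) (\<lambda>y. Q (snd y) \<circ> P (fst y))"
proof (intro ext)
  fix t :: "'t1 \<times> 't2" and M :: "complex mat"
  let ?C = "\<lambda>y. Q (snd y) \<circ> P (fst y)"
  define A1 where "A1 = {s \<in> supp dW P. f1 s = fst t}"
  define A2 where "A2 = {s \<in> supp dU Q. f2 s = snd t}"
  have fA1: "finite A1" using CPfam_D(1)[OF P] unfolding A1_def by simp
  have fA2: "finite A2" using CPfam_D(1)[OF Q] unfolding A2_def by simp
  have Psup: "is_superop dV dW (P s)" for s using CP_superop[OF CPfam_D(3)[OF P]] .
  have Qsup: "is_superop dW dU (Q s)" for s using CP_superop[OF CPfam_D(3)[OF Q]] .
  have inner: "Q s2 (superop_sum dW P A1 M) = mat dU dU (\<lambda>(i,j). \<Sum>a\<in>A1. Q s2 (P a M) $$ (i,j))" for s2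
    unfolding superop_sum_def
    by (rule superop_sum_lin[OF Qsup fA1]) (rule superop_carrier[OF Psup])
  have "(push dU f2 Q (snd t) \<circ> push dW f1 P (fst t)) M = superop_sum dU Q A2 (superop_sum dW P A1 M)"
    unfolding push_def A1_def A2_def by simp
  also have "\<dots> = mat dU dU (\<lambda>(i,j). \<Sum>s2\<in>A2. \<Sum>a\<in>A1. Q s2 (P a M) $$ (i,j))"
    by (rule eq_matI) (auto simp: inner)
  also have "\<dots> = superop_sum dU ?C (A1 \<times> A2) M"
  proof (rule eq_matI)
    fix i j assume "i < dim_row (superop_sum dU ?C (A1 \<times> A2) M)" "j < dim_col (superop_sum dU ?C (A1 \<times> A2) M)"
    then have ij: "i < dU" "j < dU" by auto
    have "(\<Sum>s2\<in>A2. \<Sum>a\<in>A1. Q s2 (P a M) $$ (i,j)) = (\<Sum>a\<in>A1. \<Sum>s2\<in>A2. Q s2 (P a M) $$ (i,j))"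
      by (rule sum.swap)
    also have "\<dots> = (\<Sum>p\<in>A1 \<times> A2. Q (snd p) (P (fst p) M) $$ (i,j))"
      by (simp add: sum.cartesian_product split_def)
    finally show "mat dU dU (\<lambda>(i,j). \<Sum>s2\<in>A2. \<Sum>a\<in>A1. Q s2 (P a M) $$ (i,j)) $$ (i,j) = superop_sum dU ?C (A1 \<times> A2) M $$ (i,j)"
      using ij by simp
  qed auto
  also have "\<dots> = superop_sum dU ?C {s \<in> supp dU ?C. (f1 (fst s), f2 (snd s)) = t} M"
    by (rule ss_mono[symmetric]) (use fA1 fA2 comp_supp[OF P Q] not_supp[of _ dU ?C] in \<open>auto simp: A1_def A2_def\<close>)
  also have "\<dots> = push dU (\<lambda>y. (f1 (fst y), f2 (snd y))) ?C t M"
    unfolding push_def by simp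
  finally show "(push dU f2 Q (snd t) \<circ> push dW f1 P (fst t)) M = push dU (\<lambda>y. (f1 (fst y), f2 (snd y))) ?C t M" .
qed

lemma part1:
  assumes "sinstr dV dW X1s X1a Y1s Y1a \<Phi>" "sinstr dW dU X2s X2a Y2s Y2a \<Psi>"
  shows "sset_map (prod_s X1s X2s) (prod_a X1a X2a)
        (CP_s dV dU (prod_s Y1s Y2s)) (CP_a dU (prod_a Y1a Y2a)) (seq_comp \<Phi> \<Psi>)"
proof -
  have m1: "\<Phi> n x \<in> CPfam dV dW (Y1s n)" if "x \<in> X1s n" for n x
    using assms(1) that unfolding sinstr_def sset_map_def CP_s_def by auto
  have m2: "\<Psi> n x \<in> CPfam dW dU (Y2s n)" if "x \<in> X2s n" for n x
    using assms(2) that unfolding sinstr_def sset_map_def CP_s_def by auto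
  have n1: "\<Phi> k (X1a \<theta> k n x) = push dW (Y1a \<theta> k n) (\<Phi> n x)" if "delta_mor k n \<theta>" "x \<in> X1s n" for k n \<theta> x
    using assms(1) that unfolding sinstr_def sset_map_def CP_a_def by auto
  have n2: "\<Psi> k (X2a \<theta> k n x) = push dU (Y2a \<theta> k n) (\<Psi> n x)" if "delta_mor k n \<theta>" "x \<in> X2s n" for k n \<theta> x
    using assms(2) that unfolding sinstr_def sset_map_def CP_a_def by auto
  have sc: "seq_comp \<Phi> \<Psi> n x = (\<lambda>y. \<Psi> n (snd x) (snd y) \<circ> \<Phi> n (fst x) (fst y))" for n x
    unfolding seq_comp_def by simp
  have pa: "prod_a Y1a Y2a \<theta> k n = (\<lambda>y. (Y1a \<theta> k n (fst y), Y2a \<theta> k n (snd y)))" for \<theta> k n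
    unfolding prod_a_def by simp
  show ?thesis
    unfolding sset_map_def
  proof (intro conjI allI impI)
    fix n x assume "x \<in> prod_s X1s X2s n"
    then have "fst x \<in> X1s n" "snd x \<in> X2s n" unfolding prod_s_def by auto
    then show "seq_comp \<Phi> \<Psi> n x \<in> CP_s dV dU (prod_s Y1s Y2s) n"
      unfolding sc CP_s_def prod_s_def by (rule comp_member[OF m1 m2])
  next
    fix k n \<theta> x assume d: "delta_mor k n \<theta>" and "x \<in> prod_s X1s X2s n"
    then have x: "fst x \<in> X1s n" "snd x \<in> X2s n" unfolding prod_s_def by auto
    show "seq_comp \<Phi> \<Psi> k (prod_a X1a X2a \<theta> k n x) = CP_a dU (prod_a Y1a Y2a) \<theta> k n (seq_comp \<Phi> \<Psi> n x)"
      unfolding sc CP_a_def pa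
      by (simp add: prod_a_def n1[OF d x(1)] n2[OF d x(2)] comp_push[OF m1[OF x(1)] m2[OF x(2)]])
  qed
qed


definition sig :: "nat \<Rightarrow> nat \<Rightarrow> nat \<Rightarrow> nat" where
  "sig D q I = (I div D div q)*(D*q) + (I mod D)*q + (I div D) mod q"
definition tau :: "nat \<Rightarrow> nat \<Rightarrow> nat \<Rightarrow> nat" where
  "tau D q i = ((i div (D*q))*q + i mod q)*D + (i div q) mod D"

lemma trip:
  assumes "r < D" "c < (q::nat)"
  shows "(a*(D*q) + r*q + c) div q = a*D + r" "(a*(D*q) + r*q + c) mod q = c"
    "(a*(D*q) + r*q + c) div (D*q) = a"
proof -
  have e: "a*(D*q) + r*q + c = (a*D + r)*q + c" by (simp add: algebra_simps)
  show "(a*(D*q) + r*q + c) div q = a*D + r" "(a*(D*q) + r*q + c) mod q = c"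
    unfolding e using assms by simp_all
  have "r*q + c < D*q" using lt_mult_add[OF assms] .
  then show "(a*(D*q) + r*q + c) div (D*q) = a"
    by (simp add: add.assoc)
qed

lemma decomp3: "(i::nat) = (i div (D*q))*(D*q) + ((i div q) mod D)*q + i mod q"
proof -
  have "i = (i div q)*q + i mod q" by simp
  also have "i div q = (i div q div D)*D + (i div q) mod D" by simp
  also have "i div q div D = i div (D*q)" by (metis div_mult2_eq mult.commute)
  finally show ?thesis by (simp add: algebra_simps)
qed

lemma tau_sig: assumes "D > 0" "q > 0" shows "tau D q (sig D q I) = I"
proof -
  define a where "a = I div D div q"
  define r where "r = I mod D"
  define c where "c = (I div D) mod q"
  have r: "r < D" "c < q" using assms unfolding r_def c_def by auto
  have s: "sig D q I = a*(D*q) + r*q + c" unfolding sig_def a_def r_def c_def ..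
  have "tau D q (sig D q I) = (a*q + c)*D + r"
    unfolding tau_def s trip[OF r] using r by simp
  also have "a*q + c = I div D" unfolding a_def c_def by simp
  also have "(I div D)*D + r = I" unfolding r_def by simp
  finally show ?thesis .
qed

lemma sig_tau: assumes "D > 0" "q > 0" shows "sig D q (tau D q i) = i"
proof -
  define a where "a = i div (D*q)"
  define r where "r = (i div q) mod D"
  define c where "c = i mod q"
  have r: "r < D" "c < q" using assms unfolding r_def c_def by auto
  have t: "tau D q i = (a*q + c)*D + r" unfolding tau_def a_def r_def c_def ..
  have "sig D q (tau D q i) = a*(D*q) + r*q + c"
    unfolding sig_def t using r by simp
  also have "\<dots> = i" unfolding a_def r_def c_def using decomp3[of i D q] by simp
  finally show ?thesis .
qed

lemma tau_lt: assumes "i < p*D*q" shows "tau D q i < p*D*q"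
proof -
  have Dq: "D > 0" "q > 0" using assms by (auto intro: gr0I)
  have "i div (D*q) < p" using assms by (simp add: less_mult_imp_div_less mult.assoc)
  then have h1: "(i div (D*q))*q + i mod q < p*q" using Dq by (intro lt_mult_add) auto
  have "(i div q) mod D < D" using Dq by simp
  from lt_mult_add[OF h1 this] have "((i div (D*q))*q + i mod q)*D + (i div q) mod D < (p*q)*D" .
  then show ?thesis unfolding tau_def by (simp add: ac_simps)
qed

lemma sig_lt: assumes "I < p*D*q" shows "sig D q I < p*D*q"
proof -
  have Dq: "D > 0" "q > 0" using assms by (auto intro: gr0I)
  have "I div D < p*q" using assms by (simp add: less_mult_imp_div_less ac_simps)
  then have "I div D div q < p" by (simp add: less_mult_imp_div_less)
  moreover have "(I mod D)*q + (I div D) mod q < D*q" using Dq by (intro lt_mult_add) auto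
  ultimately have "(I div D div q)*(D*q) + ((I mod D)*q + (I div D) mod q) < p*(D*q)"
    by (metis add_less_cancel_left lt_mult_add)
  then show ?thesis unfolding sig_def by (simp add: ac_simps)
qed

lemma bij_tau: "bij_betw (tau D q) {..<p*D*q} {..<p*D*q}"
  by (rule bij_betw_byWitness[where f' = "sig D q"])
     (auto intro!: tau_lt sig_lt sig_tau tau_sig intro: gr0I)

lemma bij_sig: "bij_betw (sig D q) {..<p*D*q} {..<p*D*q}"
  by (rule bij_betw_byWitness[where f' = "tau D q"])
     (auto intro!: tau_lt sig_lt sig_tau tau_sig intro: gr0I)


definition mid :: "nat \<Rightarrow> nat \<Rightarrow> nat \<Rightarrow> nat \<Rightarrow> superop \<Rightarrow> complex mat \<Rightarrow> complex mat" where
  "mid p q dV dW f M = mat (p*dW*q) (p*dW*q) (\<lambda>(i,j).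
     f (mat dV dV (\<lambda>(r,s). M $$ ((i div (dW*q))*(dV*q) + r*q + i mod q, (j div (dW*q))*(dV*q) + s*q + j mod q)))
       $$ ((i div q) mod dW, (j div q) mod dW))"

lemma tau_div_mod: assumes "i < p*D*q"
  shows "tau D q i div D = (i div (D*q))*q + i mod q" "tau D q i mod D = (i div q) mod D"
proof -
  have Dq: "D > 0" "q > 0" using assms by (auto intro: gr0I)
  show "tau D q i div D = (i div (D*q))*q + i mod q" "tau D q i mod D = (i div q) mod D"
    unfolding tau_def using Dq by simp_all
qed

lemma e_lt: fixes i :: nat assumes "i < p*D*q" shows "(i div (D*q))*q + i mod q < p*q"
proof -
  have Dq: "D > 0" "q > 0" using assms by (auto intro: gr0I)
  have "i div (D*q) < p" using assms by (simp add: less_mult_imp_div_less mult.assoc)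
  then show ?thesis using Dq by (intro lt_mult_add) auto
qed

lemma sig_e: assumes "r < dV" "c < q" shows "sig dV q ((a*q + c)*dV + r) = a*(dV*q) + r*q + c"
  unfolding sig_def using assms by simp

lemma mid_psd:
  assumes f: "is_CP dV dW f" and M: "psd (p*dV*q) M"
  shows "psd (p*dW*q) (mid p q dV dW f M)"
proof -
  define M' where "M' = mat (p*dV*q) (p*dV*q) (\<lambda>(I,J). M $$ (sig dV q I, sig dV q J))"
  have "psd (p*dV*q) M'" unfolding M'_def by (rule psd_perm[OF M bij_sig])
  then have "psd ((p*q)*dV) M'" by (simp add: ac_simps)
  then have "psd ((p*q)*dW) (ampl (p*q) dV dW f M')" using f unfolding is_CP_def by blast
  then have A: "psd (p*dW*q) (ampl (p*q) dV dW f M')" by (simp add: ac_simps)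
  define A' where "A' = mat (p*dW*q) (p*dW*q) (\<lambda>(i,j). ampl (p*q) dV dW f M' $$ (tau dW q i, tau dW q j))"
  have "psd (p*dW*q) A'" unfolding A'_def by (rule psd_perm[OF A bij_tau])
  moreover have "A' = mid p q dV dW f M"
  proof (rule eq_matI)
    fix i j assume "i < dim_row (mid p q dV dW f M)" "j < dim_col (mid p q dV dW f M)"
    then have ij: "i < p*dW*q" "j < p*dW*q" by (auto simp: mid_def)
    have t: "tau dW q i < (p*q)*dW" "tau dW q j < (p*q)*dW" using tau_lt[OF ij(1)] tau_lt[OF ij(2)] by (simp_all add: ac_simps)
    have blk: "block dV M' (tau dW q i div dW) (tau dW q j div dW) =
      mat dV dV (\<lambda>(r,s). M $$ ((i div (dW*q))*(dV*q) + r*q + i mod q, (j div (dW*q))*(dV*q) + s*q + j mod q))"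
    proof (rule eq_matI)
      fix r s assume "r < dim_row (mat dV dV (\<lambda>(r,s). M $$ ((i div (dW*q))*(dV*q) + r*q + i mod q, (j div (dW*q))*(dV*q) + s*q + j mod q)))"
        "s < dim_col (mat dV dV (\<lambda>(r,s). M $$ ((i div (dW*q))*(dV*q) + r*q + i mod q, (j div (dW*q))*(dV*q) + s*q + j mod q)))"
      then have rs: "r < dV" "s < dV" by auto
      have q: "i mod q < q" "j mod q < q" using ij by (auto intro!: mod_less_divisor intro: gr0I)
      have b1: "((i div (dW*q))*q + i mod q)*dV + r < p*dV*q"
        using lt_mult_add[OF e_lt[OF ij(1)] rs(1)] by (simp add: ac_simps)
      have b2: "((j div (dW*q))*q + j mod q)*dV + s < p*dV*q"
        using lt_mult_add[OF e_lt[OF ij(2)] rs(2)] by (simp add: ac_simps)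
      show "block dV M' (tau dW q i div dW) (tau dW q j div dW) $$ (r,s) =
        mat dV dV (\<lambda>(r,s). M $$ ((i div (dW*q))*(dV*q) + r*q + i mod q, (j div (dW*q))*(dV*q) + s*q + j mod q)) $$ (r,s)"
        unfolding tau_div_mod[OF ij(1)] tau_div_mod[OF ij(2)] block_def M'_def
        using rs b1 b2 sig_e[OF rs(1) q(1)] sig_e[OF rs(2) q(2)] by simp
    qed (auto simp: block_def)
    show "A' $$ (i,j) = mid p q dV dW f M $$ (i,j)"
      unfolding A'_def mid_def using ij t
      by (simp add: tau_div_mod[OF ij(1)] tau_div_mod[OF ij(2)] blk[unfolded tau_div_mod[OF ij(1)] tau_div_mod[OF ij(2)]])
  qed (auto simp: A'_def mid_def)
  ultimately show ?thesis by simp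
qed


abbreviation T where "T \<equiv> tensor_superop"

lemma T_index:
  assumes M: "M \<in> carrier_mat (dV1*dV2) (dV1*dV2)" and ij: "i < dW1*dW2" "j < dW1*dW2"
  shows "T dV1 dV2 dW1 dW2 f g M $$ (i,j) = (\<Sum>a<dV1. \<Sum>b<dV1. \<Sum>c<dV2. \<Sum>d<dV2.
     M $$ (a*dV2+c, b*dV2+d) * (f (unit_mat dV1 a b) $$ (i div dW2, j div dW2) * g (unit_mat dV2 c d) $$ (i mod dW2, j mod dW2)))"
  unfolding tensor_superop_def kron_def using M ij by simp

lemma T_carrier[simp]: "T dV1 dV2 dW1 dW2 f g M \<in> carrier_mat (dW1*dW2) (dW1*dW2)"
  unfolding tensor_superop_def by simp

lemma T_dim[simp]: "dim_row (T dV1 dV2 dW1 dW2 f g M) = dW1*dW2" "dim_col (T dV1 dV2 dW1 dW2 f g M) = dW1*dW2"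
  unfolding tensor_superop_def by simp_all

lemma T_superop: "is_superop (dV1*dV2) (dW1*dW2) (T dV1 dV2 dW1 dW2 f g)"
  unfolding is_superop_def
proof (intro conjI ballI allI impI)
  fix M :: "complex mat" assume "M \<notin> carrier_mat (dV1 * dV2) (dV1 * dV2)"
  then show "T dV1 dV2 dW1 dW2 f g M = 0\<^sub>m (dW1 * dW2) (dW1 * dW2)" unfolding tensor_superop_def by simp
next
  fix M N :: "complex mat" assume M: "M \<in> carrier_mat (dV1 * dV2) (dV1 * dV2)" and N: "N \<in> carrier_mat (dV1 * dV2) (dV1 * dV2)"
  have MN: "M + N \<in> carrier_mat (dV1 * dV2) (dV1 * dV2)" using M N by simp
  show "T dV1 dV2 dW1 dW2 f g (M + N) = T dV1 dV2 dW1 dW2 f g M + T dV1 dV2 dW1 dW2 f g N"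
  proof (rule eq_matI)
    fix i j assume "i < dim_row (T dV1 dV2 dW1 dW2 f g M + T dV1 dV2 dW1 dW2 f g N)" "j < dim_col (T dV1 dV2 dW1 dW2 f g M + T dV1 dV2 dW1 dW2 f g N)"
    then have ij: "i < dW1*dW2" "j < dW1*dW2" using T_carrier[of dV1 dV2 dW1 dW2 f g M] by auto
    show "T dV1 dV2 dW1 dW2 f g (M + N) $$ (i,j) = (T dV1 dV2 dW1 dW2 f g M + T dV1 dV2 dW1 dW2 f g N) $$ (i,j)"
      using ij M N MN carrier_matD[OF M] carrier_matD[OF N]
      by (simp add: T_index sum.distrib[symmetric] distrib_right lt_mult_add cong: sum.cong_simp)
  qed (use T_carrier in auto)
next
  fix M :: "complex mat" and c assume M: "M \<in> carrier_mat (dV1 * dV2) (dV1 * dV2)"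
  have cM: "c \<cdot>\<^sub>m M \<in> carrier_mat (dV1 * dV2) (dV1 * dV2)" using M by simp
  show "T dV1 dV2 dW1 dW2 f g (c \<cdot>\<^sub>m M) = c \<cdot>\<^sub>m T dV1 dV2 dW1 dW2 f g M"
  proof (rule eq_matI)
    fix i j assume "i < dim_row (c \<cdot>\<^sub>m T dV1 dV2 dW1 dW2 f g M)" "j < dim_col (c \<cdot>\<^sub>m T dV1 dV2 dW1 dW2 f g M)"
    then have ij: "i < dW1*dW2" "j < dW1*dW2" using T_carrier[of dV1 dV2 dW1 dW2 f g M] by auto
    show "T dV1 dV2 dW1 dW2 f g (c \<cdot>\<^sub>m M) $$ (i,j) = (c \<cdot>\<^sub>m T dV1 dV2 dW1 dW2 f g M) $$ (i,j)"
      using ij M cM T_carrier[of dV1 dV2 dW1 dW2 f g M]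
      by (simp add: T_index sum_distrib_left mult.assoc lt_mult_add cong: sum.cong_simp)
  qed (use T_carrier in auto)
qed simp


lemma mod_mult_div: "(i::nat) mod (dW1*dW2) div dW2 = i div dW2 mod dW1"
proof (cases "dW2 = 0")
  case False
  have "i mod (dW1*dW2) = dW2 * (i div dW2 mod dW1) + i mod dW2" by (metis mod_mult2_eq mult.commute)
  then show ?thesis using False by simp
qed simp
lemma mod_mult_mod: "(i::nat) mod (dW1*dW2) mod dW2 = i mod dW2"
proof (cases "dW2 = 0")
  case False
  have "i mod (dW1*dW2) = dW2 * (i div dW2 mod dW1) + i mod dW2" by (metis mod_mult2_eq mult.commute)
  then show ?thesis using False by simp
qed simp

lemma block_index: "r < d \<Longrightarrow> s < d \<Longrightarrow> block d M a b $$ (r,s) = M $$ (a*d + r, b*d + s)"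
  unfolding block_def by simp

lemma T_ampl:
  assumes f: "is_superop dV1 dW1 f" and g: "is_superop dV2 dW2 g"
  shows "ampl k (dV1*dV2) (dW1*dW2) (T dV1 dV2 dW1 dW2 f g) M = mid k dW2 dV1 dW1 f (ampl (k*dV1) dV2 dW2 g M)"
proof (rule eq_matI)
  fix i j assume "i < dim_row (mid k dW2 dV1 dW1 f (ampl (k*dV1) dV2 dW2 g M))" "j < dim_col (mid k dW2 dV1 dW1 f (ampl (k*dV1) dV2 dW2 g M))"
  then have ij: "i < k*(dW1*dW2)" "j < k*(dW1*dW2)" by (auto simp: mid_def ac_simps)
  then have pos: "dW1 > 0" "dW2 > 0" "k > 0" by (auto intro: gr0I)
  define a0 where "a0 = i div (dW1*dW2)"
  define b0 where "b0 = j div (dW1*dW2)"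
  have a0: "a0 < k" "b0 < k" unfolding a0_def b0_def using ij by (simp_all add: div_lt_of_lt_mult)
  define F where "F = (\<lambda>a b. f (unit_mat dV1 a b) $$ (i div dW2 mod dW1, j div dW2 mod dW1))"
  define G where "G = (\<lambda>c d. g (unit_mat dV2 c d) $$ (i mod dW2, j mod dW2))"
  have im: "i mod (dW1*dW2) < dW1*dW2" "j mod (dW1*dW2) < dW1*dW2" using pos by simp_all
  have "ampl k (dV1*dV2) (dW1*dW2) (T dV1 dV2 dW1 dW2 f g) M $$ (i,j) =
     T dV1 dV2 dW1 dW2 f g (block (dV1*dV2) M a0 b0) $$ (i mod (dW1*dW2), j mod (dW1*dW2))"
    using ij unfolding a0_def b0_def by simp
  also have "\<dots> = (\<Sum>a<dV1. \<Sum>b<dV1. \<Sum>c<dV2. \<Sum>d<dV2.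
     block (dV1*dV2) M a0 b0 $$ (a*dV2+c, b*dV2+d) * (F a b * G c d))"
    unfolding T_index[OF block_carrier im] F_def G_def mod_mult_div mod_mult_mod ..
  also have "\<dots> = (\<Sum>a<dV1. \<Sum>b<dV1. \<Sum>c<dV2. \<Sum>d<dV2.
     M $$ ((a0*dV1+a)*dV2+c, (b0*dV1+b)*dV2+d) * (F a b * G c d))"
  proof (intro sum.cong refl)
    fix a b c d assume abcd: "a \<in> {..<dV1}" "b \<in> {..<dV1}" "c \<in> {..<dV2}" "d \<in> {..<dV2}"
    have "block (dV1*dV2) M a0 b0 $$ (a*dV2+c, b*dV2+d) = M $$ (a0*(dV1*dV2) + (a*dV2+c), b0*(dV1*dV2) + (b*dV2+d))"
      by (rule block_index) (use abcd lt_mult_add in auto)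
    also have "a0*(dV1*dV2) + (a*dV2+c) = (a0*dV1+a)*dV2+c" by (simp add: algebra_simps)
    also have "b0*(dV1*dV2) + (b*dV2+d) = (b0*dV1+b)*dV2+d" by (simp add: algebra_simps)
    finally show "block (dV1*dV2) M a0 b0 $$ (a*dV2+c, b*dV2+d) * (F a b * G c d) = M $$ ((a0*dV1+a)*dV2+c, (b0*dV1+b)*dV2+d) * (F a b * G c d)"
      by simp
  qed
  finally have L: "ampl k (dV1*dV2) (dW1*dW2) (T dV1 dV2 dW1 dW2 f g) M $$ (i,j) = (\<Sum>a<dV1. \<Sum>b<dV1. \<Sum>c<dV2. \<Sum>d<dV2.
     M $$ ((a0*dV1+a)*dV2+c, (b0*dV1+b)*dV2+d) * (F a b * G c d))" .
  define N where "N = ampl (k*dV1) dV2 dW2 g M"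
  define X where "X = mat dV1 dV1 (\<lambda>(r,s). N $$ ((i div (dW1*dW2))*(dV1*dW2) + r*dW2 + i mod dW2, (j div (dW1*dW2))*(dV1*dW2) + s*dW2 + j mod dW2))"
  have X: "X \<in> carrier_mat dV1 dV1" unfolding X_def by simp
  have wi: "i div dW2 mod dW1 < dW1" "j div dW2 mod dW1 < dW1" using pos by simp_all
  have ci: "i mod dW2 < dW2" "j mod dW2 < dW2" using pos by simp_all
  have iR: "i < k*dW1*dW2" "j < k*dW1*dW2" using ij by (simp_all add: ac_simps)
  have "mid k dW2 dV1 dW1 f N $$ (i,j) = f X $$ (i div dW2 mod dW1, j div dW2 mod dW1)"
    unfolding mid_def X_def using iR by simp
  also have "\<dots> = (\<Sum>r<dV1. \<Sum>s<dV1. X $$ (r,s) * F r s)"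
    unfolding superop_expand[OF f X wi] F_def ..
  also have "\<dots> = (\<Sum>r<dV1. \<Sum>s<dV1. (\<Sum>t<dV2. \<Sum>u<dV2. M $$ ((a0*dV1+r)*dV2+t, (b0*dV1+s)*dV2+u) * G t u) * F r s)"
  proof (intro sum.cong refl)
    fix r s assume rs: "r \<in> {..<dV1}" "s \<in> {..<dV1}"
    have x1: "a0*(dV1*dW2) + r*dW2 + i mod dW2 < (k*dV1)*dW2"
    proof -
      have "r*dW2 + i mod dW2 < dV1*dW2" using rs ci by (intro lt_mult_add) auto
      then have "a0*(dV1*dW2) + (r*dW2 + i mod dW2) < k*(dV1*dW2)" using a0 lt_mult_add by blast
      then show ?thesis by (simp add: ac_simps)
    qed
    have x2: "b0*(dV1*dW2) + s*dW2 + j mod dW2 < (k*dV1)*dW2"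
    proof -
      have "s*dW2 + j mod dW2 < dV1*dW2" using rs ci by (intro lt_mult_add) auto
      then have "b0*(dV1*dW2) + (s*dW2 + j mod dW2) < k*(dV1*dW2)" using a0 lt_mult_add by blast
      then show ?thesis by (simp add: ac_simps)
    qed
    have "X $$ (r,s) = N $$ (a0*(dV1*dW2) + r*dW2 + i mod dW2, b0*(dV1*dW2) + s*dW2 + j mod dW2)"
      unfolding X_def a0_def b0_def using rs by simp
    also have "\<dots> = g (block dV2 M (a0*dV1 + r) (b0*dV1 + s)) $$ (i mod dW2, j mod dW2)"
      unfolding N_def using x1 x2 trip[OF _ ci(1), of r dV1 a0] trip[OF _ ci(2), of s dV1 b0] rs by simp
    also have "\<dots> = (\<Sum>t<dV2. \<Sum>u<dV2. block dV2 M (a0*dV1 + r) (b0*dV1 + s) $$ (t,u) * G t u)"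
      unfolding superop_expand[OF g block_carrier ci] G_def ..
    also have "\<dots> = (\<Sum>t<dV2. \<Sum>u<dV2. M $$ ((a0*dV1+r)*dV2+t, (b0*dV1+s)*dV2+u) * G t u)"
      by (intro sum.cong refl) (simp add: block_index)
    finally show "X $$ (r,s) * F r s = (\<Sum>t<dV2. \<Sum>u<dV2. M $$ ((a0*dV1+r)*dV2+t, (b0*dV1+s)*dV2+u) * G t u) * F r s"
      by simp
  qed
  also have "\<dots> = (\<Sum>a<dV1. \<Sum>b<dV1. \<Sum>c<dV2. \<Sum>d<dV2.
     M $$ ((a0*dV1+a)*dV2+c, (b0*dV1+b)*dV2+d) * (F a b * G c d))"
    by (simp add: sum_distrib_right sum_distrib_left ac_simps)
  finally show "ampl k (dV1*dV2) (dW1*dW2) (T dV1 dV2 dW1 dW2 f g) M $$ (i,j) = mid k dW2 dV1 dW1 f (ampl (k*dV1) dV2 dW2 g M) $$ (i,j)"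
    unfolding L N_def by (rule sym)
qed (auto simp: mid_def ac_simps)

lemma T_CP:
  assumes f: "is_CP dV1 dW1 f" and g: "is_CP dV2 dW2 g"
  shows "is_CP (dV1*dV2) (dW1*dW2) (T dV1 dV2 dW1 dW2 f g)"
  unfolding is_CP_def
proof (intro conjI allI impI)
  show "is_superop (dV1*dV2) (dW1*dW2) (T dV1 dV2 dW1 dW2 f g)" by (rule T_superop)
  fix k M assume "psd (k * (dV1 * dV2)) M"
  then have "psd ((k*dV1)*dV2) M" by (simp add: ac_simps)
  then have "psd ((k*dV1)*dW2) (ampl (k*dV1) dV2 dW2 g M)" using g unfolding is_CP_def by blast
  then have "psd (k*dV1*dW2) (ampl (k*dV1) dV2 dW2 g M)" by simp
  from mid_psd[OF f this] have "psd (k*dW1*dW2) (mid k dW2 dV1 dW1 f (ampl (k*dV1) dV2 dW2 g M))" .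
  then show "psd (k * (dW1 * dW2)) (ampl k (dV1 * dV2) (dW1 * dW2) (T dV1 dV2 dW1 dW2 f g) M)"
    using T_ampl[OF CP_superop[OF f] CP_superop[OF g]] by (simp add: ac_simps)
qed


lemma T_out: "M \<notin> carrier_mat (dV1*dV2) (dV1*dV2) \<Longrightarrow> T dV1 dV2 dW1 dW2 f g M = 0\<^sub>m (dW1*dW2) (dW1*dW2)"
  unfolding tensor_superop_def by simp

lemma divmod_lt: assumes "i < dW1*(dW2::nat)" shows "i div dW2 < dW1" "i mod dW2 < dW2"
proof -
  have "dW2 > 0" using assms by (auto intro: gr0I)
  then show "i div dW2 < dW1" "i mod dW2 < dW2" using assms by (auto simp: less_mult_imp_div_less mult.commute)
qed

lemma T_zero2:
  assumes g: "\<And>M. g M = 0\<^sub>m dW2 dW2"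
  shows "T dV1 dV2 dW1 dW2 f g M = 0\<^sub>m (dW1*dW2) (dW1*dW2)"
proof (cases "M \<in> carrier_mat (dV1*dV2) (dV1*dV2)")
  case True
  show ?thesis
  proof (rule eq_matI)
    fix i j assume "i < dim_row (0\<^sub>m (dW1*dW2) (dW1*dW2) :: complex mat)" "j < dim_col (0\<^sub>m (dW1*dW2) (dW1*dW2) :: complex mat)"
    then have ij: "i < dW1*dW2" "j < dW1*dW2" by auto
    show "T dV1 dV2 dW1 dW2 f g M $$ (i,j) = 0\<^sub>m (dW1*dW2) (dW1*dW2) $$ (i,j)"
      using ij divmod_lt[OF ij(1)] divmod_lt[OF ij(2)] by (simp add: T_index[OF True ij] g)
  qed auto
qed (simp add: T_out)

lemma T_zero1:
  assumes f: "\<And>M. f M = 0\<^sub>m dW1 dW1"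
  shows "T dV1 dV2 dW1 dW2 f g M = 0\<^sub>m (dW1*dW2) (dW1*dW2)"
proof (cases "M \<in> carrier_mat (dV1*dV2) (dV1*dV2)")
  case True
  show ?thesis
  proof (rule eq_matI)
    fix i j assume "i < dim_row (0\<^sub>m (dW1*dW2) (dW1*dW2) :: complex mat)" "j < dim_col (0\<^sub>m (dW1*dW2) (dW1*dW2) :: complex mat)"
    then have ij: "i < dW1*dW2" "j < dW1*dW2" by auto
    show "T dV1 dV2 dW1 dW2 f g M $$ (i,j) = 0\<^sub>m (dW1*dW2) (dW1*dW2) $$ (i,j)"
      using ij divmod_lt[OF ij(1)] divmod_lt[OF ij(2)] by (simp add: T_index[OF True ij] f)
  qed auto
qed (simp add: T_out)

lemma T_lin1:
  "T dV1 dV2 dW1 dW2 (superop_sum dW1 F A) g M = superop_sum (dW1*dW2) (\<lambda>a. T dV1 dV2 dW1 dW2 (F a) g) A M"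
proof (cases "M \<in> carrier_mat (dV1*dV2) (dV1*dV2)")
  case True
  show ?thesis
  proof (rule eq_matI)
    fix i j assume "i < dim_row (superop_sum (dW1*dW2) (\<lambda>a. T dV1 dV2 dW1 dW2 (F a) g) A M)" "j < dim_col (superop_sum (dW1*dW2) (\<lambda>a. T dV1 dV2 dW1 dW2 (F a) g) A M)"
    then have ij: "i < dW1*dW2" "j < dW1*dW2" by auto
    show "T dV1 dV2 dW1 dW2 (superop_sum dW1 F A) g M $$ (i,j) = superop_sum (dW1*dW2) (\<lambda>a. T dV1 dV2 dW1 dW2 (F a) g) A M $$ (i,j)"
      using ij divmod_lt[OF ij(1)] divmod_lt[OF ij(2)]
      by (simp add: T_index[OF True ij] sum_distrib_left sum_distrib_right sum.swap[of _ A])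
  qed auto
next
  case False
  then show ?thesis by (intro eq_matI) (auto simp: T_out)
qed

lemma T_lin2:
  "T dV1 dV2 dW1 dW2 f (superop_sum dW2 G A) M = superop_sum (dW1*dW2) (\<lambda>a. T dV1 dV2 dW1 dW2 f (G a)) A M"
proof (cases "M \<in> carrier_mat (dV1*dV2) (dV1*dV2)")
  case True
  show ?thesis
  proof (rule eq_matI)
    fix i j assume "i < dim_row (superop_sum (dW1*dW2) (\<lambda>a. T dV1 dV2 dW1 dW2 f (G a)) A M)" "j < dim_col (superop_sum (dW1*dW2) (\<lambda>a. T dV1 dV2 dW1 dW2 f (G a)) A M)"
    then have ij: "i < dW1*dW2" "j < dW1*dW2" by auto
    show "T dV1 dV2 dW1 dW2 f (superop_sum dW2 G A) M $$ (i,j) = superop_sum (dW1*dW2) (\<lambda>a. T dV1 dV2 dW1 dW2 f (G a)) A M $$ (i,j)"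
      using ij divmod_lt[OF ij(1)] divmod_lt[OF ij(2)]
      by (simp add: T_index[OF True ij] sum_distrib_left sum_distrib_right sum.swap[of _ A])
  qed auto
next
  case False
  then show ?thesis by (intro eq_matI) (auto simp: T_out)
qed

lemma unit_carrier[simp]: "unit_mat d a b \<in> carrier_mat d d" unfolding unit_mat_def by simp

lemma mtrace_unit: "a < d \<Longrightarrow> b < d \<Longrightarrow> mtrace d (unit_mat d a b) = (if a = b then 1 else 0)"
  unfolding mtrace_def unit_mat_def by (cases "a = b") (auto intro!: sum.neutral)

lemma T_trace:
  assumes M: "M \<in> carrier_mat (dV1*dV2) (dV1*dV2)" and g: "is_channel dV2 dW2 g"
  shows "mtrace (dW1*dW2) (T dV1 dV2 dW1 dW2 f g M) =
     (\<Sum>a<dV1. \<Sum>b<dV1. (\<Sum>c<dV2. M $$ (a*dV2+c, b*dV2+c)) * mtrace dW1 (f (unit_mat dV1 a b)))"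
proof -
  define K where "K = (\<lambda>a b c d. M $$ (a*dV2+c, b*dV2+d))"
  define F where "F = (\<lambda>a b x. f (unit_mat dV1 a b) $$ (x, x))"
  define G where "G = (\<lambda>c d y. g (unit_mat dV2 c d) $$ (y, y))"
  have "mtrace (dW1*dW2) (T dV1 dV2 dW1 dW2 f g M) = (\<Sum>i<dW1*dW2. \<Sum>a<dV1. \<Sum>b<dV1. \<Sum>c<dV2. \<Sum>d<dV2.
      K a b c d * (F a b (i div dW2) * G c d (i mod dW2)))"
    unfolding mtrace_def K_def F_def G_def by (intro sum.cong refl) (simp add: T_index[OF M])
  also have "\<dots> = (\<Sum>a<dV1. \<Sum>b<dV1. \<Sum>c<dV2. \<Sum>d<dV2. \<Sum>i<dW1*dW2.
      K a b c d * (F a b (i div dW2) * G c d (i mod dW2)))"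
    by (simp only: sum.swap[of _ _ "{..<dW1*dW2}"])
  also have "\<dots> = (\<Sum>a<dV1. \<Sum>b<dV1. \<Sum>c<dV2. \<Sum>d<dV2.
      K a b c d * (mtrace dW1 (f (unit_mat dV1 a b)) * mtrace dW2 (g (unit_mat dV2 c d))))"
  proof (intro sum.cong refl)
    fix a b c d
    have "(\<Sum>i<dW1*dW2. K a b c d * (F a b (i div dW2) * G c d (i mod dW2))) =
          K a b c d * (\<Sum>x<dW1. \<Sum>y<dW2. F a b x * G c d y)"
      by (simp add: sum_distrib_left[symmetric] sum_div_mod[where h = "\<lambda>x y. F a b x * G c d y"])
    also have "\<dots> = K a b c d * (mtrace dW1 (f (unit_mat dV1 a b)) * mtrace dW2 (g (unit_mat dV2 c d)))"
      unfolding mtrace_def F_def G_def by (simp add: sum_product)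
    finally show "(\<Sum>i<dW1*dW2. K a b c d * (F a b (i div dW2) * G c d (i mod dW2))) =
          K a b c d * (mtrace dW1 (f (unit_mat dV1 a b)) * mtrace dW2 (g (unit_mat dV2 c d)))" .
  qed
  also have "\<dots> = (\<Sum>a<dV1. \<Sum>b<dV1. \<Sum>c<dV2. \<Sum>d<dV2.
      K a b c d * (mtrace dW1 (f (unit_mat dV1 a b)) * (if c = d then 1 else 0)))"
    using g unfolding is_channel_def by (intro sum.cong refl) (simp add: mtrace_unit)
  also have "\<dots> = (\<Sum>a<dV1. \<Sum>b<dV1. (\<Sum>c<dV2. M $$ (a*dV2+c, b*dV2+c)) * mtrace dW1 (f (unit_mat dV1 a b)))"
    unfolding K_def by (simp add: sum_distrib_right if_distrib cong: if_cong)
  finally show ?thesis .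
qed


lemma ss_empty: "superop_sum e F {} = zero_superop e"
  unfolding superop_sum_def zero_superop_def by (intro ext eq_matI) auto

lemma ss_zero: "(\<And>a. a \<in> A \<Longrightarrow> F a M = 0\<^sub>m e e) \<Longrightarrow> superop_sum e F A M = 0\<^sub>m e e"
  unfolding superop_sum_def by (intro eq_matI) auto

lemma bullet_supp:
  fixes P :: "'y \<Rightarrow> superop" and Q :: "'y \<Rightarrow> 'z \<Rightarrow> superop"
  shows "supp (dW1*dW2) (\<lambda>z. superop_sum (dW1*dW2) (\<lambda>y. T dV1 dV2 dW1 dW2 (P y) (Q y z)) S')
     \<subseteq> (\<Union>y\<in>S'. supp dW2 (Q y))"
proof
  fix z assume z: "z \<in> supp (dW1*dW2) (\<lambda>z. superop_sum (dW1*dW2) (\<lambda>y. T dV1 dV2 dW1 dW2 (P y) (Q y z)) S')"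
  show "z \<in> (\<Union>y\<in>S'. supp dW2 (Q y))"
  proof (rule ccontr)
    assume "z \<notin> (\<Union>y\<in>S'. supp dW2 (Q y))"
    then have "\<And>y M. y \<in> S' \<Longrightarrow> Q y z M = 0\<^sub>m dW2 dW2" using not_supp by fastforce
    then have "superop_sum (dW1*dW2) (\<lambda>y. T dV1 dV2 dW1 dW2 (P y) (Q y z)) S' = zero_superop (dW1*dW2)"
      unfolding zero_superop_def by (intro ext ss_zero T_zero2) auto
    then show False using z unfolding supp_def by simp
  qed
qed

lemma trace_sum_div_mod: "mtrace (d1*d2) M = (\<Sum>a<d1. \<Sum>c<d2. M $$ (a*d2+c, a*d2+c))"
proof -
  have "mtrace (d1*d2) M = (\<Sum>i<d1*d2. M $$ ((i div d2)*d2 + i mod d2, (i div d2)*d2 + i mod d2))"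
    unfolding mtrace_def by simp
  also have "\<dots> = (\<Sum>a<d1. \<Sum>c<d2. M $$ (a*d2+c, a*d2+c))"
    by (rule sum_div_mod)
  finally show ?thesis .
qed

lemma bullet_member:
  fixes P :: "'y \<Rightarrow> superop" and Q :: "'y \<Rightarrow> 'z \<Rightarrow> superop"
  assumes P: "P \<in> CPfam dV1 dW1 S" and Q: "\<And>y. y \<in> S \<Longrightarrow> Q y \<in> CPfam dV2 dW2 Z"
  shows "(\<lambda>z. superop_sum (dW1*dW2) (\<lambda>y. T dV1 dV2 dW1 dW2 (P y) (Q y z)) (S \<inter> supp dW1 P))
     \<in> CPfam (dV1*dV2) (dW1*dW2) Z"
proof -
  define S' where "S' = S \<inter> supp dW1 P"
  have S'eq: "S' = supp dW1 P" unfolding S'_def using CPfam_D(2)[OF P] by auto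
  have finS: "finite S'" unfolding S'eq using CPfam_D(1)[OF P] .
  define B where "B = (\<lambda>z. superop_sum (dW1*dW2) (\<lambda>y. T dV1 dV2 dW1 dW2 (P y) (Q y z)) S')"
  define Zf where "Zf = (\<Union>y\<in>S'. supp dW2 (Q y))"
  have QS: "Q y \<in> CPfam dV2 dW2 Z" if "y \<in> S'" for y using Q that unfolding S'_def by auto
  have finZ: "finite Zf" unfolding Zf_def using finS CPfam_D(1)[OF QS] by auto
  have subB: "supp (dW1*dW2) B \<subseteq> Zf" unfolding B_def Zf_def by (rule bullet_supp)
  have ZfZ: "Zf \<subseteq> Z" unfolding Zf_def using CPfam_D(2)[OF QS] by auto
  have CPB: "is_CP (dV1*dV2) (dW1*dW2) (B z)" for z
    unfolding B_def by (intro ss_CP T_CP CPfam_D(3)[OF P] CPfam_D(3)[OF QS])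
  have ch: "is_channel (dV1*dV2) (dW1*dW2) (superop_sum (dW1*dW2) B (supp (dW1*dW2) B))"
    unfolding is_channel_def
  proof (intro conjI ballI)
    show "is_CP (dV1*dV2) (dW1*dW2) (superop_sum (dW1*dW2) B (supp (dW1*dW2) B))" using CPB by (intro ss_CP)
    fix M :: "complex mat" assume M: "M \<in> carrier_mat (dV1*dV2) (dV1*dV2)"
    have "mtrace (dW1*dW2) (superop_sum (dW1*dW2) B (supp (dW1*dW2) B) M) = mtrace (dW1*dW2) (superop_sum (dW1*dW2) B Zf M)"
      using ss_mono[OF finZ subB, of B M] not_supp[of _ "dW1*dW2" B] by auto
    also have "\<dots> = (\<Sum>z\<in>Zf. \<Sum>y\<in>S'. mtrace (dW1*dW2) (T dV1 dV2 dW1 dW2 (P y) (Q y z) M))"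
      unfolding B_def by (simp add: mtrace_ss)
    also have "\<dots> = (\<Sum>y\<in>S'. \<Sum>z\<in>Zf. mtrace (dW1*dW2) (T dV1 dV2 dW1 dW2 (P y) (Q y z) M))"
      by (rule sum.swap)
    also have "\<dots> = (\<Sum>y\<in>S'. mtrace (dW1*dW2) (T dV1 dV2 dW1 dW2 (P y) (superop_sum dW2 (Q y) (supp dW2 (Q y))) M))"
    proof (rule sum.cong[OF refl])
      fix y assume y: "y \<in> S'"
      have "superop_sum dW2 (Q y) Zf = superop_sum dW2 (Q y) (supp dW2 (Q y))"
      proof (rule ext, rule ss_mono[symmetric])
        show "finite Zf" by (rule finZ)
        show "supp dW2 (Q y) \<subseteq> Zf" using y unfolding Zf_def by auto
      qed (rule not_supp, simp)
      then show "(\<Sum>z\<in>Zf. mtrace (dW1*dW2) (T dV1 dV2 dW1 dW2 (P y) (Q y z) M)) =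
         mtrace (dW1*dW2) (T dV1 dV2 dW1 dW2 (P y) (superop_sum dW2 (Q y) (supp dW2 (Q y))) M)"
        by (metis T_lin2 mtrace_ss)
    qed
    also have "\<dots> = (\<Sum>y\<in>S'. \<Sum>a<dV1. \<Sum>b<dV1. (\<Sum>c<dV2. M $$ (a*dV2+c, b*dV2+c)) * mtrace dW1 (P y (unit_mat dV1 a b)))"
      using T_trace[OF M CPfam_D(4)[OF QS]] by simp
    also have "\<dots> = (\<Sum>a<dV1. \<Sum>b<dV1. (\<Sum>c<dV2. M $$ (a*dV2+c, b*dV2+c)) * (\<Sum>y\<in>S'. mtrace dW1 (P y (unit_mat dV1 a b))))"
      by (simp add: sum_distrib_left sum.swap[of _ S'])
    also have "\<dots> = (\<Sum>a<dV1. \<Sum>b<dV1. (\<Sum>c<dV2. M $$ (a*dV2+c, b*dV2+c)) * (if a = b then 1 else 0))"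
    proof (intro sum.cong refl)
      fix a b assume ab: "a \<in> {..<dV1}" "b \<in> {..<dV1}"
      have "(\<Sum>y\<in>S'. mtrace dW1 (P y (unit_mat dV1 a b))) = mtrace dW1 (superop_sum dW1 P (supp dW1 P) (unit_mat dV1 a b))"
        unfolding S'eq by (simp add: mtrace_ss)
      also have "\<dots> = mtrace dV1 (unit_mat dV1 a b)" using CPfam_D(4)[OF P] unfolding is_channel_def by simp
      also have "\<dots> = (if a = b then 1 else 0)" using ab by (simp add: mtrace_unit)
      finally show "(\<Sum>c<dV2. M $$ (a*dV2+c, b*dV2+c)) * (\<Sum>y\<in>S'. mtrace dW1 (P y (unit_mat dV1 a b))) =
          (\<Sum>c<dV2. M $$ (a*dV2+c, b*dV2+c)) * (if a = b then 1 else 0)" by simp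
    qed
    also have "\<dots> = (\<Sum>a<dV1. \<Sum>c<dV2. M $$ (a*dV2+c, a*dV2+c))"
      by (simp add: if_distrib cong: if_cong)
    also have "\<dots> = mtrace (dV1*dV2) M" by (rule trace_sum_div_mod[symmetric])
    finally show "mtrace (dW1*dW2) (superop_sum (dW1*dW2) B (supp (dW1*dW2) B) M) = mtrace (dV1*dV2) M" .
  qed
  have "B \<in> CPfam (dV1*dV2) (dW1*dW2) Z"
    unfolding CPfam_def using finite_subset[OF subB finZ] subB ZfZ CPB ch by auto
  then show ?thesis unfolding B_def S'_def .
qed


lemma bullet_push:
  fixes P :: "'y \<Rightarrow> superop" and Qn :: "'y \<Rightarrow> 'z \<Rightarrow> superop" and Qk :: "'y2 \<Rightarrow> 'z2 \<Rightarrow> superop"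
    and f :: "'y \<Rightarrow> 'y2" and g :: "'z \<Rightarrow> 'z2"
  assumes P: "P \<in> CPfam dV1 dW1 Sn" and Q: "\<And>y. y \<in> Sn \<Longrightarrow> Qn y \<in> CPfam dV2 dW2 Zn"
    and fmap: "\<And>y. y \<in> Sn \<Longrightarrow> f y \<in> Sk" and natQ: "\<And>y. y \<in> Sn \<Longrightarrow> Qk (f y) = push dW2 g (Qn y)"
  shows "(\<lambda>z. superop_sum (dW1*dW2) (\<lambda>y'. T dV1 dV2 dW1 dW2 (push dW1 f P y') (Qk y' z)) (Sk \<inter> supp dW1 (push dW1 f P)))
       = push (dW1*dW2) g (\<lambda>z. superop_sum (dW1*dW2) (\<lambda>y. T dV1 dV2 dW1 dW2 (P y) (Qn y z)) (Sn \<inter> supp dW1 P))"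
proof (intro ext)
  fix z :: 'z2 and M :: "complex mat"
  define SP where "SP = supp dW1 P"
  have SPeq: "Sn \<inter> supp dW1 P = SP" unfolding SP_def using CPfam_D(2)[OF P] by auto
  have finSP: "finite SP" unfolding SP_def using CPfam_D(1)[OF P] .
  have SPSn: "SP \<subseteq> Sn" unfolding SP_def using CPfam_D(2)[OF P] .
  define B where "B = (\<lambda>z. superop_sum (dW1*dW2) (\<lambda>y. T dV1 dV2 dW1 dW2 (P y) (Qn y z)) SP)"
  define Zf where "Zf = (\<Union>y\<in>SP. supp dW2 (Qn y))"
  have QS: "Qn y \<in> CPfam dV2 dW2 Zn" if "y \<in> SP" for y using Q SPSn that by auto
  have finZ: "finite Zf" unfolding Zf_def using finSP CPfam_D(1)[OF QS] by auto
  have subB: "supp (dW1*dW2) B \<subseteq> Zf" unfolding B_def Zf_def by (rule bullet_supp)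
  define L where "L = (\<lambda>y'. T dV1 dV2 dW1 dW2 (push dW1 f P y') (Qk y' z))"
  have Lfib: "push dW1 f P y' = superop_sum dW1 P {s \<in> SP. f s = y'}" for y'
    unfolding push_def SP_def ..
  have step1: "superop_sum (dW1*dW2) L (Sk \<inter> supp dW1 (push dW1 f P)) M = superop_sum (dW1*dW2) L (f ` SP) M"
  proof (rule ss_mono)
    show "finite (f ` SP)" using finSP by simp
    show "Sk \<inter> supp dW1 (push dW1 f P) \<subseteq> f ` SP"
    proof
      fix y' assume y': "y' \<in> Sk \<inter> supp dW1 (push dW1 f P)"
      show "y' \<in> f ` SP"
      proof (rule ccontr)
        assume "y' \<notin> f ` SP"
        then have e: "{s \<in> SP. f s = y'} = {}" by auto
        have "push dW1 f P y' = zero_superop dW1" unfolding Lfib e by (rule ss_empty)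
        then show False using y' unfolding supp_def by simp
      qed
    qed
    fix y' assume y': "y' \<in> f ` SP - Sk \<inter> supp dW1 (push dW1 f P)"
    then have "y' \<in> Sk" using fmap SPSn by auto
    with y' have "y' \<notin> supp dW1 (push dW1 f P)" by auto
    then show "L y' M = 0\<^sub>m (dW1*dW2) (dW1*dW2)" unfolding L_def
      by (intro T_zero1) (rule not_supp)
  qed
  have step2: "push (dW1*dW2) g B z M = superop_sum (dW1*dW2) B {z' \<in> Zf. g z' = z} M"
    unfolding push_def
  proof (rule ss_mono)
    show "finite {z' \<in> Zf. g z' = z}" using finZ by simp
    show "{s \<in> supp (dW1*dW2) B. g s = z} \<subseteq> {z' \<in> Zf. g z' = z}" using subB by auto
  qed (auto intro: not_supp)
  show "superop_sum (dW1*dW2) (\<lambda>y'. T dV1 dV2 dW1 dW2 (push dW1 f P y') (Qk y' z)) (Sk \<inter> supp dW1 (push dW1 f P)) M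
       = push (dW1*dW2) g (\<lambda>z. superop_sum (dW1*dW2) (\<lambda>y. T dV1 dV2 dW1 dW2 (P y) (Qn y z)) (Sn \<inter> supp dW1 P)) z M"
    unfolding SPeq B_def[symmetric] L_def[symmetric] step1 step2
  proof (rule eq_matI)
    fix i j assume "i < dim_row (superop_sum (dW1*dW2) B {z' \<in> Zf. g z' = z} M)" "j < dim_col (superop_sum (dW1*dW2) B {z' \<in> Zf. g z' = z} M)"
    then have ij: "i < dW1*dW2" "j < dW1*dW2" by auto
    define H where "H = (\<lambda>s. T dV1 dV2 dW1 dW2 (P s) (Qk (f s) z) M $$ (i,j))"
    have "superop_sum (dW1*dW2) L (f ` SP) M $$ (i,j) = (\<Sum>y'\<in>f ` SP. \<Sum>s\<in>{s \<in> SP. f s = y'}. H s)"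
      using ij
    proof (simp, intro sum.cong refl)
      fix y' assume "y' \<in> f ` SP"
      have "L y' M $$ (i,j) = superop_sum (dW1*dW2) (\<lambda>s. T dV1 dV2 dW1 dW2 (P s) (Qk y' z)) {s \<in> SP. f s = y'} M $$ (i,j)"
        unfolding L_def Lfib T_lin1 ..
      also have "\<dots> = (\<Sum>s\<in>{s \<in> SP. f s = y'}. H s)" using ij unfolding H_def by simp
      finally show "L y' M $$ (i,j) = (\<Sum>s\<in>{s \<in> SP. f s = y'}. H s)" .
    qed
    also have "\<dots> = (\<Sum>s\<in>SP. H s)"
      using sum.group[OF finSP _ subset_refl, of f H] finSP by simp
    also have "\<dots> = (\<Sum>s\<in>SP. \<Sum>z'\<in>{z' \<in> supp dW2 (Qn s). g z' = z}. T dV1 dV2 dW1 dW2 (P s) (Qn s z') M $$ (i,j))"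
    proof (rule sum.cong[OF refl])
      fix s assume s: "s \<in> SP"
      have "H s = T dV1 dV2 dW1 dW2 (P s) (push dW2 g (Qn s) z) M $$ (i,j)"
        unfolding H_def using natQ s SPSn by auto
      also have "\<dots> = (\<Sum>z'\<in>{z' \<in> supp dW2 (Qn s). g z' = z}. T dV1 dV2 dW1 dW2 (P s) (Qn s z') M $$ (i,j))"
        unfolding push_def T_lin2 using ij by simp
      finally show "H s = \<dots>" .
    qed
    also have "\<dots> = (\<Sum>s\<in>SP. \<Sum>z'\<in>{z' \<in> Zf. g z' = z}. T dV1 dV2 dW1 dW2 (P s) (Qn s z') M $$ (i,j))"
    proof (rule sum.cong[OF refl], rule sum.mono_neutral_left)
      fix s assume s: "s \<in> SP"
      show "finite {z' \<in> Zf. g z' = z}" using finZ by simp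
      show "{z' \<in> supp dW2 (Qn s). g z' = z} \<subseteq> {z' \<in> Zf. g z' = z}" using s unfolding Zf_def by auto
      show "\<forall>z'\<in>{z' \<in> Zf. g z' = z} - {z' \<in> supp dW2 (Qn s). g z' = z}. T dV1 dV2 dW1 dW2 (P s) (Qn s z') M $$ (i,j) = 0"
      proof
        fix z' assume "z' \<in> {z' \<in> Zf. g z' = z} - {z' \<in> supp dW2 (Qn s). g z' = z}"
        then have "z' \<notin> supp dW2 (Qn s)" by auto
        then have "T dV1 dV2 dW1 dW2 (P s) (Qn s z') M = 0\<^sub>m (dW1*dW2) (dW1*dW2)"
          by (intro T_zero2) (rule not_supp)
        then show "T dV1 dV2 dW1 dW2 (P s) (Qn s z') M $$ (i,j) = 0" using ij by simp
      qed
    qed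
    also have "\<dots> = (\<Sum>z'\<in>{z' \<in> Zf. g z' = z}. \<Sum>s\<in>SP. T dV1 dV2 dW1 dW2 (P s) (Qn s z') M $$ (i,j))"
      by (rule sum.swap)
    also have "\<dots> = superop_sum (dW1*dW2) B {z' \<in> Zf. g z' = z} M $$ (i,j)"
      unfolding B_def using ij by simp
    finally show "superop_sum (dW1*dW2) L (f ` SP) M $$ (i,j) = superop_sum (dW1*dW2) B {z' \<in> Zf. g z' = z} M $$ (i,j)" .
  qed auto
qed


lemma part2:
  assumes Y: "sset Ys Ya" and A: "sinstr dV1 dW1 Xs Xa Ys Ya \<Phi>" and B: "sinstr dV2 dW2 Ys Ya Zs Za \<Psi>"
  shows "sset_map Xs Xa (CP_s (dV1 * dV2) (dW1 * dW2) Zs) (CP_a (dW1 * dW2) Za)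
        (bullet_comp dV1 dV2 dW1 dW2 Ys \<Phi> \<Psi>)"
proof -
  have m1: "\<Phi> n x \<in> CPfam dV1 dW1 (Ys n)" if "x \<in> Xs n" for n x
    using A that unfolding sinstr_def sset_map_def CP_s_def by auto
  have m2: "\<Psi> n y \<in> CPfam dV2 dW2 (Zs n)" if "y \<in> Ys n" for n y
    using B that unfolding sinstr_def sset_map_def CP_s_def by auto
  have n1: "\<Phi> k (Xa \<theta> k n x) = push dW1 (Ya \<theta> k n) (\<Phi> n x)" if "delta_mor k n \<theta>" "x \<in> Xs n" for k n \<theta> x
    using A that unfolding sinstr_def sset_map_def CP_a_def by auto
  have n2: "\<Psi> k (Ya \<theta> k n y) = push dW2 (Za \<theta> k n) (\<Psi> n y)" if "delta_mor k n \<theta>" "y \<in> Ys n" for k n \<theta> y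
    using B that unfolding sinstr_def sset_map_def CP_a_def by auto
  have ym: "Ya \<theta> k n y \<in> Ys k" if "delta_mor k n \<theta>" "y \<in> Ys n" for k n \<theta> y
    using Y that unfolding sset_def by blast
  have bc: "bullet_comp dV1 dV2 dW1 dW2 Ys \<Phi> \<Psi> n x =
     (\<lambda>z. superop_sum (dW1*dW2) (\<lambda>y. T dV1 dV2 dW1 dW2 (\<Phi> n x y) (\<Psi> n y z)) (Ys n \<inter> supp dW1 (\<Phi> n x)))" for n x
    unfolding bullet_comp_def ..
  show ?thesis
    unfolding sset_map_def
  proof (intro conjI allI impI)
    fix n x assume x: "x \<in> Xs n"
    show "bullet_comp dV1 dV2 dW1 dW2 Ys \<Phi> \<Psi> n x \<in> CP_s (dV1 * dV2) (dW1 * dW2) Zs n"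
      unfolding bc CP_s_def by (rule bullet_member[OF m1[OF x] m2])
  next
    fix k n \<theta> x assume d: "delta_mor k n \<theta>" and x: "x \<in> Xs n"
    show "bullet_comp dV1 dV2 dW1 dW2 Ys \<Phi> \<Psi> k (Xa \<theta> k n x) = CP_a (dW1 * dW2) Za \<theta> k n (bullet_comp dV1 dV2 dW1 dW2 Ys \<Phi> \<Psi> n x)"
      unfolding bc CP_a_def n1[OF d x]
      by (rule bullet_push[where P="\<Phi> n x" and Qn="\<Psi> n" and Qk="\<Psi> k" and f="Ya \<theta> k n" and g="Za \<theta> k n"
             and Sn="Ys n" and Sk="Ys k" and Zn="Zs n", OF m1[OF x] m2 ym[OF d] n2[OF d]])
  qed
qed

theorem lemma6p4:
  fixes dV dW dU dV1 dV2 dW1 dW2 :: nat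
  shows
  "(\<forall>(X1s :: nat \<Rightarrow> 'x1 set) X1a (X2s :: nat \<Rightarrow> 'x2 set) X2a
       (Y1s :: nat \<Rightarrow> 'y1 set) Y1a (Y2s :: nat \<Rightarrow> 'y2 set) Y2a \<Phi> \<Psi>.
      sset X1s X1a \<longrightarrow> sset X2s X2a \<longrightarrow> sset Y1s Y1a \<longrightarrow> sset Y2s Y2a \<longrightarrow>
      sinstr dV dW X1s X1a Y1s Y1a \<Phi> \<longrightarrow> sinstr dW dU X2s X2a Y2s Y2a \<Psi> \<longrightarrow>
      sset_map (prod_s X1s X2s) (prod_a X1a X2a)
        (CP_s dV dU (prod_s Y1s Y2s)) (CP_a dU (prod_a Y1a Y2a)) (seq_comp \<Phi> \<Psi>))
   \<and>
   (\<forall>(Xs :: nat \<Rightarrow> 'x set) Xa (Ys :: nat \<Rightarrow> 'y set) Ya (Zs :: nat \<Rightarrow> 'z set) Za \<Phi> \<Psi>.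
      sset Xs Xa \<longrightarrow> sset Ys Ya \<longrightarrow> sset Zs Za \<longrightarrow>
      sinstr dV1 dW1 Xs Xa Ys Ya \<Phi> \<longrightarrow> sinstr dV2 dW2 Ys Ya Zs Za \<Psi> \<longrightarrow>
      sset_map Xs Xa (CP_s (dV1 * dV2) (dW1 * dW2) Zs) (CP_a (dW1 * dW2) Za)
        (bullet_comp dV1 dV2 dW1 dW2 Ys \<Phi> \<Psi>))"
  by (intro conjI allI impI) (auto intro: part1 part2)


end
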